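(* Let $\Lambda = \{\lambda_1, \lambda_2, \ldots, \lambda_n\}$ be a list of complex numbers such that $\lambda_1 \in \mathbb{R}$, $\lambda_1 \geq |\lambda_j|$ for $j = 2, \ldots, n$, $\sum_{j=1}^n \lambda_j \geq 0$ and $\overline{\Lambda} = \Lambda$. Let $S \leq n$ be a positive integer and let $\omega_1, \ldots, \omega_S$ be numbers with $0 \leq \omega_k \leq \lambda_1$ for $k = 1, \ldots, S$. Suppose that (1) there is a partition $\Lambda = \Lambda_1 \cup \cdots \cup \Lambda_S$, where $\Lambda_j = \{\lambda_{j1}, \lambda_{j2}, \ldots, \lambda_{jp_j}\}$ for $j = 1, \ldots, S$ and $\lambda_{11} = \lambda_1$, such that at most one of the lists $\Lambda_j$ has odd size, and for each $j = 1, \ldots, S$ the list $\Gamma_j = \{\omega_j, \lambda_{j2}, \ldots, \lambda_{jp_j}\}$ is realizable by a normal centrosymmetric nonnegative matrix with Perron root $\omega_j$; and (2) there is an $S \times S$ normal nonnegative matrix $B$ whose eigenvalues are $\lambda_{11}, \lambda_{21}, \ldots, \lambda_{S1}$ and whose diagonal entries are $\omega_S, \omega_{S-1}, \ldots, \omega_1$ (in this order). Then $\{\lambda_1, \lambda_2, \ldots, \lambda_n\}$ is realizable by a normal centrosymmetric nonnegative matrix.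
   Context: Lists are multisets (repetitions allowed); $\overline{\Lambda}$ is the list of complex conjugates. A list of $k$ complex numbers is realizable by a matrix $A$ if $A$ is a $k \times k$ matrix whose eigenvalues (with multiplicity) are exactly the numbers in the list. A real matrix is nonnegative if all its entries are nonnegative; the Perron root of a nonnegative matrix is its spectral radius, which is an eigenvalue. $J$ denotes the reverse identity matrix of the appropriate size; a square matrix $A$ is centrosymmetric if $JAJ = A$; $A$ is normal if $AA^* = A^*A$. *)

theory Defs
  imports "Jordan_Normal_Form.Spectral_Radius"
begin

definition realizes :: "complex list \<Rightarrow> real mat \<Rightarrow> bool" where
  "realizes L A \<longleftrightarrow> A \<in> carrier_mat (length L) (length L) \<and>
     char_poly (map_mat complex_of_real A) = (\<Prod>a\<leftarrow>L. [:- a, 1:])"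

definition nonneg_mat :: "real mat \<Rightarrow> bool" where
  "nonneg_mat A \<longleftrightarrow> (\<forall>i<dim_row A. \<forall>j<dim_col A. A $$ (i, j) \<ge> 0)"

text \<open>For a real matrix, the conjugate transpose is the transpose.\<close>
definition normal_mat :: "real mat \<Rightarrow> bool" where
  "normal_mat A \<longleftrightarrow> A * transpose_mat A = transpose_mat A * A"

definition rev_id :: "nat \<Rightarrow> real mat" where
  "rev_id n = mat n n (\<lambda>(i, j). if i + j = n - 1 then 1 else 0)"

definition centrosymmetric :: "real mat \<Rightarrow> bool" where
  "centrosymmetric A \<longleftrightarrow> rev_id (dim_row A) * A * rev_id (dim_row A) = A"

definition perron_root :: "real mat \<Rightarrow> real" where
  "perron_root A = spectral_radius (map_mat complex_of_real A)"

definition NCN_realizable :: "complex list \<Rightarrow> bool" where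
  "NCN_realizable L \<longleftrightarrow> (\<exists>A. realizes L A \<and> normal_mat A \<and> centrosymmetric A \<and> nonneg_mat A)"

end

theory Submission
  imports Defs
begin


definition reidx :: "(nat \<Rightarrow> nat) \<Rightarrow> nat \<Rightarrow> 'a mat \<Rightarrow> 'a mat" where
  "reidx f n X = mat n n (\<lambda>(i,k). X $$ (f i, f k))"

lemma reidx_carrier[simp]: "reidx f n X \<in> carrier_mat n n"
  unfolding reidx_def by auto

lemma reidx_index[simp]: "i < n \<Longrightarrow> k < n \<Longrightarrow> reidx f n X $$ (i,k) = X $$ (f i, f k)"
  "dim_row (reidx f n X) = n" "dim_col (reidx f n X) = n"
  unfolding reidx_def by auto

lemma bij_sum_reindex: fixes f :: "nat \<Rightarrow> nat" assumes "bij_betw f {..<n} {..<n}"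
  shows "(\<Sum>l\<in>{0..<n}. g (f l)) = (\<Sum>l\<in>{0..<n}. (g l :: 'a :: comm_monoid_add))"
  using sum.reindex_bij_betw[of f "{..<n}" "{..<n}" g] assms by (simp add: atLeast0LessThan)

lemma if01_mult[simp]: "(if b then 1 else 0) * (x::'a::semiring_1) = (if b then x else 0)"
  "x * (if b then 1 else 0) = (if b then x else 0)" by auto

lemma reidx_similar:
  fixes X :: "'a :: comm_ring_1 mat"
  assumes f: "bij_betw f {..<n} {..<n}" and X: "X \<in> carrier_mat n n"
  shows "similar_mat (reidx f n X) X"
proof -
  define Pm :: "'a mat" where "Pm = mat n n (\<lambda>(i,k). if k = f i then 1 else 0)"
  define Qm :: "'a mat" where "Qm = mat n n (\<lambda>(i,k). if i = f k then 1 else 0)"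
  have fi: "\<And>i. i < n \<Longrightarrow> f i < n" using f by (auto simp: bij_betw_def)
  have inj: "\<And>i k. i < n \<Longrightarrow> k < n \<Longrightarrow> f i = f k \<Longrightarrow> i = k"
    using f by (auto simp: bij_betw_def inj_on_def)
  have c: "Pm \<in> carrier_mat n n" "Qm \<in> carrier_mat n n" unfolding Pm_def Qm_def by auto
  have PX: "Pm * X = mat n n (\<lambda>(i,k). X $$ (f i, k))"
    by (rule eq_matI, insert X fi, auto simp: Pm_def scalar_prod_def sum.delta sum.delta')
  have PXQ: "Pm * X * Qm = reidx f n X"
    unfolding PX by (rule eq_matI, insert X fi, auto simp: Qm_def scalar_prod_def sum.delta sum.delta')
  have PQ: "Pm * Qm = 1\<^sub>m n"
    by (rule eq_matI, insert fi inj, auto simp: Pm_def Qm_def scalar_prod_def sum.delta sum.delta')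
  have QP: "Qm * Pm = 1\<^sub>m n"
  proof (rule eq_matI)
    fix i k assume ik: "i < dim_row (1\<^sub>m n :: 'a mat)" "k < dim_col (1\<^sub>m n :: 'a mat)"
    have "(Qm * Pm) $$ (i,k) = (\<Sum>l = 0..<n. (\<lambda>m. (if i = m then 1 else 0) * (if k = m then 1 else 0)) (f l))"
      using ik by (auto simp: Pm_def Qm_def scalar_prod_def intro!: sum.cong)
    also have "\<dots> = (\<Sum>l = 0..<n. (if i = l then 1 else 0) * (if k = l then 1 else 0))"
      by (rule bij_sum_reindex[OF f])
    also have "\<dots> = (1\<^sub>m n :: 'a mat) $$ (i,k)" using ik by (auto simp: sum.delta)
    finally show "(Qm * Pm) $$ (i,k) = (1\<^sub>m n :: 'a mat) $$ (i,k)" .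
  qed (insert c, auto)
  show ?thesis unfolding similar_mat_def similar_mat_wit_def Let_def
    by (rule exI[of _ Pm], rule exI[of _ Qm], insert c X PQ QP PXQ, auto)
qed


definition off :: "(nat \<Rightarrow> nat) \<Rightarrow> nat \<Rightarrow> nat" where "off q j = (\<Sum>k<j. q k)"
definition blk :: "(nat \<Rightarrow> nat) \<Rightarrow> nat \<Rightarrow> nat" where "blk q i = (LEAST j. i < off q (Suc j))"

lemma off_Suc: "off q (Suc j) = off q j + q j" by (simp add: off_def)

lemma off_mono: "j \<le> j' \<Longrightarrow> off q j \<le> off q j'"
  unfolding off_def by (rule sum_mono2, auto)

lemma blk_off: assumes "a < q j" shows "blk q (off q j + a) = j"
  unfolding blk_def
proof (rule Least_equality)
  show "off q j + a < off q (Suc j)" using assms by (simp add: off_Suc)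
  fix y assume y: "off q j + a < off q (Suc y)"
  show "j \<le> y"
  proof (rule ccontr)
    assume "\<not> j \<le> y" hence "Suc y \<le> j" by auto
    from off_mono[OF this, of q] y show False by auto
  qed
qed

lemma blk_bounds: assumes i: "i < off q S"
  shows "blk q i < S" "off q (blk q i) \<le> i" "i < off q (Suc (blk q i))"
proof -
  have ex: "i < off q (Suc (S - 1))" using i by (cases S, auto simp: off_def)
  have le: "blk q i \<le> S - 1" unfolding blk_def by (rule Least_le, rule ex)
  have S0: "S > 0" using i by (cases S, auto simp: off_def)
  show "blk q i < S" using le S0 by auto
  show lt: "i < off q (Suc (blk q i))" unfolding blk_def by (rule LeastI, rule ex)
  show "off q (blk q i) \<le> i"
  proof (cases "blk q i")
    case 0 thus ?thesis by (simp add: off_def)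
  next
    case (Suc m)
    have "\<not> i < off q (Suc m)"
    proof
      assume "i < off q (Suc m)"
      hence "blk q i \<le> m" unfolding blk_def by (rule Least_le)
      thus False using Suc by auto
    qed
    thus ?thesis using Suc by auto
  qed
qed

lemma blk_decomp: assumes i: "i < off q S"
  shows "i = off q (blk q i) + (i - off q (blk q i))" "i - off q (blk q i) < q (blk q i)"
  using blk_bounds[OF i] by (auto simp: off_Suc)

definition bd :: "nat \<Rightarrow> (nat \<Rightarrow> nat) \<Rightarrow> (nat \<Rightarrow> 'a :: zero mat) \<Rightarrow> 'a mat" where
  "bd S q X = mat (off q S) (off q S) (\<lambda>(i,k). if blk q i = blk q k then
      X (blk q i) $$ (i - off q (blk q i), k - off q (blk q k)) else 0)"

lemma bd_carrier[simp]: "bd S q X \<in> carrier_mat (off q S) (off q S)"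
  "dim_row (bd S q X) = off q S" "dim_col (bd S q X) = off q S"
  unfolding bd_def by auto

lemma bd_index: assumes "j < S" "a < q j" "k < S" "b < q k"
  shows "bd S q X $$ (off q j + a, off q k + b) = (if j = k then X j $$ (a,b) else 0)"
proof -
  have "off q j + a < off q (Suc j)" using assms by (simp add: off_Suc)
  also have "\<dots> \<le> off q S" using assms by (intro off_mono, auto)
  finally have 1: "off q j + a < off q S" .
  have "off q k + b < off q (Suc k)" using assms by (simp add: off_Suc)
  also have "\<dots> \<le> off q S" using assms by (intro off_mono, auto)
  finally have 2: "off q k + b < off q S" .
  show ?thesis unfolding bd_def using 1 2 blk_off[of a q j] blk_off[of b q k] assms by auto
qed

lemma bd_Suc: assumes XS: "X S \<in> carrier_mat (q S) (q S)" shows "bd (Suc S) q X = four_block_mat (bd S q X) (0\<^sub>m (off q S) (q S)) (0\<^sub>m (q S) (off q S)) (X S)"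
proof (rule eq_matI)
  fix i k assume ik: "i < dim_row (four_block_mat (bd S q X) (0\<^sub>m (off q S) (q S)) (0\<^sub>m (q S) (off q S)) (X S))"
    "k < dim_col (four_block_mat (bd S q X) (0\<^sub>m (off q S) (q S)) (0\<^sub>m (q S) (off q S)) (X S))"
  hence i: "i < off q (Suc S)" and k: "k < off q (Suc S)" using XS by (auto simp: off_Suc)
  note bi = blk_bounds[OF i] and bk = blk_bounds[OF k]
  show "bd (Suc S) q X $$ (i,k) = four_block_mat (bd S q X) (0\<^sub>m (off q S) (q S)) (0\<^sub>m (q S) (off q S)) (X S) $$ (i,k)"
  proof (cases "i < off q S")
    case iS: True
    note bi' = blk_bounds[OF iS]
    show ?thesis
    proof (cases "k < off q S")
      case kS: True
      note bk' = blk_bounds[OF kS]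
      show ?thesis using i k iS kS unfolding bd_def by (auto simp: off_Suc)
    next
      case kS: False
      have "blk q k = S" using bk kS by (metis less_SucE not_less off_mono Suc_leI less_le_trans)
      moreover have "blk q i \<noteq> S" using bi' by auto
      ultimately have "bd (Suc S) q X $$ (i,k) = 0" using i k unfolding bd_def by auto
      moreover have "four_block_mat (bd S q X) (0\<^sub>m (off q S) (q S)) (0\<^sub>m (q S) (off q S)) (X S) $$ (i,k) = 0"
        using i k iS kS XS by (simp add: off_Suc)
      ultimately show ?thesis by simp
    qed
  next
    case iS: False
    have bis: "blk q i = S" using bi iS by (metis less_SucE not_less off_mono Suc_leI less_le_trans)
    show ?thesis
    proof (cases "k < off q S")
      case kS: True
      note bk' = blk_bounds[OF kS]
      have "four_block_mat (bd S q X) (0\<^sub>m (off q S) (q S)) (0\<^sub>m (q S) (off q S)) (X S) $$ (i,k) = 0"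
        using i k iS kS XS by (simp add: off_Suc)
      moreover have "bd (Suc S) q X $$ (i,k) = 0" using i k bis bk' unfolding bd_def by auto
      ultimately show ?thesis by simp
    next
      case kS: False
      have bks: "blk q k = S" using bk kS by (metis less_SucE not_less off_mono Suc_leI less_le_trans)
      have "four_block_mat (bd S q X) (0\<^sub>m (off q S) (q S)) (0\<^sub>m (q S) (off q S)) (X S) $$ (i,k)
        = X S $$ (i - off q S, k - off q S)"
        using i k iS kS XS by (simp add: off_Suc)
      moreover have "bd (Suc S) q X $$ (i,k) = X S $$ (i - off q S, k - off q S)"
        using i k bis bks unfolding bd_def by auto
      ultimately show ?thesis by simp
    qed
  qed
qed (insert XS, auto simp: off_Suc bd_def)


definition cpr :: "real mat \<Rightarrow> complex poly" where
  "cpr X = char_poly (map_mat complex_of_real X)"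

lemma map_zero_of_real[simp]: "map_mat complex_of_real (0\<^sub>m n m) = 0\<^sub>m n m"
  by (rule eq_matI, auto)

lemma cpr_0: "X \<in> carrier_mat 0 0 \<Longrightarrow> cpr X = 1"
proof -
  assume X: "X \<in> carrier_mat 0 0"
  have X': "map_mat complex_of_real X \<in> carrier_mat 0 0" using X by auto
  have "upper_triangular (map_mat complex_of_real X)" using X' by (auto simp: upper_triangular_def)
  from char_poly_upper_triangular[OF X' this] show ?thesis using X'
    by (auto simp: cpr_def diag_mat_def)
qed

lemma cpr_four_block_diag: assumes A: "A \<in> carrier_mat n n" and D: "D \<in> carrier_mat m m"
  shows "cpr (four_block_mat A (0\<^sub>m n m) (0\<^sub>m m n) D) = cpr A * cpr D"
proof -
  have "map_mat complex_of_real (four_block_mat A (0\<^sub>m n m) (0\<^sub>m m n) D)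
    = four_block_mat (map_mat complex_of_real A) (0\<^sub>m n m) (0\<^sub>m m n) (map_mat complex_of_real D)"
    by (subst map_four_block_mat[OF A _ _ D], auto)
  moreover have "char_poly (four_block_mat (map_mat complex_of_real A) (0\<^sub>m n m) (0\<^sub>m m n) (map_mat complex_of_real D))
     = char_poly (map_mat complex_of_real A) * char_poly (map_mat complex_of_real D)"
    by (rule char_poly_0_block[OF refl], insert char_poly_factorized[of "map_mat complex_of_real A" n] 
      char_poly_factorized[of "map_mat complex_of_real D" m] A D, auto)
  ultimately show ?thesis unfolding cpr_def by simp
qed

lemma cpr_bd: assumes "\<And>j. j < S \<Longrightarrow> X j \<in> carrier_mat (q j) (q j)"
  shows "cpr (bd S q X) = (\<Prod>j<S. cpr (X j))"
  using assms
proof (induct S)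
  case 0
  have "bd 0 q X \<in> carrier_mat 0 0" using bd_carrier(1)[of 0 q X] by (simp add: off_def)
  thus ?case by (simp add: cpr_0)
next
  case (Suc S)
  have XS: "X S \<in> carrier_mat (q S) (q S)" using Suc by auto
  show ?case unfolding bd_Suc[of X S q, OF XS] cpr_four_block_diag[OF bd_carrier(1) XS]
    using Suc by simp
qed

lemma four_block_diag_mult: assumes A: "A \<in> carrier_mat n n" and D: "D \<in> carrier_mat m m"
  and A': "A' \<in> carrier_mat n n" and D': "D' \<in> carrier_mat m m"
  shows "four_block_mat A (0\<^sub>m n m) (0\<^sub>m m n) D * four_block_mat A' (0\<^sub>m n m) (0\<^sub>m m n) D'
    = four_block_mat (A * A') (0\<^sub>m n m) (0\<^sub>m m n) (D * D')"
  by (subst mult_four_block_mat[OF A _ _ D A' _ _ D'], insert A D A' D', auto)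

lemma four_block_diag_transpose: assumes A: "A \<in> carrier_mat n n" and D: "D \<in> carrier_mat m m"
  shows "transpose_mat (four_block_mat A (0\<^sub>m n m) (0\<^sub>m m n) D) = four_block_mat (transpose_mat A) (0\<^sub>m n m) (0\<^sub>m m n) (transpose_mat D)"
  by (subst transpose_four_block_mat[OF A _ _ D], auto)

lemma four_block_diag_eq: assumes A: "A \<in> carrier_mat n n" and D: "D \<in> carrier_mat m m"
  and A': "A' \<in> carrier_mat n n" and D': "D' \<in> carrier_mat m m"
  and eq: "four_block_mat A (0\<^sub>m n m) (0\<^sub>m m n) D = four_block_mat A' (0\<^sub>m n m) (0\<^sub>m m n) D'"
  shows "A = A' \<and> D = D'"
proof
  show "A = A'"
  proof (rule eq_matI)
    fix i j assume "i < dim_row A'" "j < dim_col A'"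
    thus "A $$ (i,j) = A' $$ (i,j)" using arg_cong[OF eq, of "\<lambda>M. M $$ (i,j)"] A D A' D' by auto
  qed (insert A A', auto)
  show "D = D'"
  proof (rule eq_matI)
    fix i j assume "i < dim_row D'" "j < dim_col D'"
    thus "D $$ (i,j) = D' $$ (i,j)" using arg_cong[OF eq, of "\<lambda>M. M $$ (i+n,j+n)"] A D A' D' by auto
  qed (insert D D', auto)
qed

lemma normal_four_block_diag: assumes A: "A \<in> carrier_mat n n" and D: "D \<in> carrier_mat m m"
  shows "normal_mat (four_block_mat A (0\<^sub>m n m) (0\<^sub>m m n) D) \<longleftrightarrow> normal_mat A \<and> normal_mat D"
proof -
  have AT: "transpose_mat A \<in> carrier_mat n n" and DT: "transpose_mat D \<in> carrier_mat m m" using A D by auto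
  show ?thesis
    unfolding normal_mat_def four_block_diag_transpose[OF A D] four_block_diag_mult[OF A D AT DT]
      four_block_diag_mult[OF AT DT A D]
    using four_block_diag_eq[of "A * transpose_mat A" n "D * transpose_mat D" m "transpose_mat A * A" "transpose_mat D * D"] A D
    by auto
qed

lemma normal_bd: assumes "\<And>j. j < S \<Longrightarrow> X j \<in> carrier_mat (q j) (q j)"
  and "\<And>j. j < S \<Longrightarrow> normal_mat (X j)"
  shows "normal_mat (bd S q X)"
  using assms
proof (induct S)
  case 0
  show ?case unfolding normal_mat_def by (rule eq_matI, auto simp: bd_def off_def)
next
  case (Suc S)
  have XS: "X S \<in> carrier_mat (q S) (q S)" using Suc by auto
  show ?case unfolding bd_Suc[of X S q, OF XS] normal_four_block_diag[OF bd_carrier(1) XS]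
    using Suc by simp
qed


definition hhv :: "nat \<Rightarrow> real vec \<Rightarrow> real vec" where
  "hhv p u = vec p (\<lambda>i. (if i = 0 then 1 else 0) + u $ i)"
definition hhW :: "nat \<Rightarrow> real vec \<Rightarrow> real mat" where
  "hhW p u = mat p p (\<lambda>(i,k). hhv p u $ i * hhv p u $ k / (1 + u $ 0) - (if i = k then 1 else 0))"

lemma hhW_carrier[simp]: "hhW p u \<in> carrier_mat p p" "dim_row (hhW p u) = p" "dim_col (hhW p u) = p"
  unfolding hhW_def by auto

lemma hhW_sym: "transpose_mat (hhW p u) = hhW p u"
  by (rule eq_matI, auto simp: hhW_def)

lemma hhW_col0: assumes "p > 0" "u $ 0 \<ge> 0" "a < p"
  shows "hhW p u $$ (a,0) = u $ a"
  using assms by (auto simp: hhW_def hhv_def field_simps)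

lemma hhW_sq: assumes p: "p > 0" and u: "u \<in> carrier_vec p" and u0: "u $ 0 \<ge> 0" and nu: "u \<bullet> u = 1"
  shows "hhW p u * hhW p u = 1\<^sub>m p"
proof (rule eq_matI)
  define v where "v = hhv p u"
  define h where "h = 1 + u $ 0"
  have h: "h > 0" using u0 by (simp add: h_def)
  have sv: "(\<Sum>l = 0..<p. v $ l * v $ l) = 2 * h"
  proof -
    have "(\<Sum>l = 0..<p. v $ l * v $ l) = (\<Sum>l = 0..<p. (if l = 0 then 1 + 2 * u $ 0 else 0) + u $ l * u $ l)"
      by (rule sum.cong, auto simp: v_def hhv_def algebra_simps)
    also have "\<dots> = 1 + 2 * u $ 0 + (\<Sum>l = 0..<p. u $ l * u $ l)"
      using p by (simp add: sum.distrib sum.delta)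
    also have "(\<Sum>l = 0..<p. u $ l * u $ l) = 1" using nu u by (simp add: scalar_prod_def)
    finally show ?thesis by (simp add: h_def)
  qed
  fix i k assume ik: "i < dim_row (1\<^sub>m p :: real mat)" "k < dim_col (1\<^sub>m p :: real mat)"
  hence i: "i < p" and k: "k < p" by auto
  have "(hhW p u * hhW p u) $$ (i,k) = (\<Sum>l = 0..<p. (v $ i * v $ l / h - (if i = l then 1 else 0)) * (v $ l * v $ k / h - (if l = k then 1 else 0)))"
    using i k by (simp add: hhW_def scalar_prod_def v_def h_def)
  also have "\<dots> = (\<Sum>l = 0..<p. v $ i * v $ k / (h*h) * (v $ l * v $ l)
     - (if i = l then v $ l * v $ k / h else 0) - (if l = k then v $ i * v $ l / h else 0) + (if i = l then (if l = k then 1 else 0) else 0))"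
    using h by (intro sum.cong, auto simp: field_simps)
  also have "\<dots> = (\<Sum>l = 0..<p. v $ i * v $ k / (h*h) * (v $ l * v $ l))
     - (\<Sum>l = 0..<p. (if i = l then v $ l * v $ k / h else 0)) - (\<Sum>l = 0..<p. (if l = k then v $ i * v $ l / h else 0)) + (\<Sum>l = 0..<p. (if i = l then (if l = k then 1 else 0) else 0))"
    by (simp add: sum.distrib sum_subtractf)
  also have "(\<Sum>l = 0..<p. v $ i * v $ k / (h*h) * (v $ l * v $ l)) = v $ i * v $ k / (h*h) * (2 * h)"
    by (subst sum_distrib_left[symmetric], subst sv, simp)
  also have "v $ i * v $ k / (h*h) * (2 * h) - (\<Sum>l = 0..<p. (if i = l then v $ l * v $ k / h else 0)) - (\<Sum>l = 0..<p. (if l = k then v $ i * v $ l / h else 0)) + (\<Sum>l = 0..<p. (if i = l then (if l = k then 1 else 0) else 0))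
      = v $ i * v $ k / (h*h) * (2 * h) - v $ i * v $ k / h - v $ i * v $ k / h + (if i = k then 1 else 0)"
    using i k by (simp add: sum.delta sum.delta')
  also have "\<dots> = (1\<^sub>m p :: real mat) $$ (i,k)" using i k h by (simp add: field_simps)
  finally show "(hhW p u * hhW p u) $$ (i,k) = (1\<^sub>m p :: real mat) $$ (i,k)" .
qed auto

lemma hhW_col0_vec: assumes "p > 0" "u $ 0 \<ge> 0" "u \<in> carrier_vec p"
  shows "col (hhW p u) 0 = u"
  by (rule eq_vecI, insert assms hhW_col0[OF assms(1,2)], auto)

lemma col0_conj: assumes p: "p > 0" and u: "u \<in> carrier_vec p" and u0: "u $ 0 \<ge> 0" and nu: "u \<bullet> u = 1"
  and B: "B \<in> carrier_mat p p" and ev: "B *\<^sub>v u = w \<cdot>\<^sub>v u"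
  shows "col (hhW p u * B * hhW p u) 0 = w \<cdot>\<^sub>v unit_vec p 0"
proof -
  let ?W = "hhW p u"
  have W: "?W \<in> carrier_mat p p" by simp
  have "col (?W * B * ?W) 0 = (?W * B) *\<^sub>v col ?W 0" using W B p by (intro col_mult2, auto)
  also have "col ?W 0 = u" by (rule hhW_col0_vec[OF p u0 u])
  also have "(?W * B) *\<^sub>v u = ?W *\<^sub>v (B *\<^sub>v u)" using W B u by (rule assoc_mult_mat_vec)
  also have "\<dots> = w \<cdot>\<^sub>v (?W *\<^sub>v u)" unfolding ev by (rule mult_mat_vec[OF W u])
  also have "?W *\<^sub>v u = ?W *\<^sub>v col ?W 0" unfolding hhW_col0_vec[OF p u0 u] ..
  also have "\<dots> = col (?W * ?W) 0" using W p by (intro col_mult2[symmetric], auto)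
  also have "\<dots> = unit_vec p 0" unfolding hhW_sq[OF p u u0 nu] using p by simp
  finally show ?thesis .
qed

lemma block_form: assumes A: "A \<in> carrier_mat p p" and p: "p > 0" and u: "u \<in> carrier_vec p"
  and u0: "u $ 0 \<ge> 0" and nu: "u \<bullet> u = 1"
  and ev: "A *\<^sub>v u = w \<cdot>\<^sub>v u" and evT: "transpose_mat A *\<^sub>v u = w \<cdot>\<^sub>v u"
  shows "hhW p u * A * hhW p u = four_block_mat (w \<cdot>\<^sub>m 1\<^sub>m 1) (0\<^sub>m 1 (p-1)) (0\<^sub>m (p-1) 1)
     (mat (p-1) (p-1) (\<lambda>(i,k). (hhW p u * A * hhW p u) $$ (i+1,k+1)))" (is "?A' = ?F")
proof -
  let ?W = "hhW p u"
  have W: "?W \<in> carrier_mat p p" by simp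
  have A': "?A' \<in> carrier_mat p p" using A W by auto
  have c1: "col ?A' 0 = w \<cdot>\<^sub>v unit_vec p 0" by (rule col0_conj[OF p u u0 nu A ev])
  have T: "transpose_mat ?A' = ?W * transpose_mat A * ?W"
  proof -
    have "transpose_mat ?A' = transpose_mat ?W * transpose_mat (?W * A)"
      using A W by (intro transpose_mult, auto)
    also have "transpose_mat (?W * A) = transpose_mat A * transpose_mat ?W"
      using A W by (intro transpose_mult, auto)
    finally show ?thesis unfolding hhW_sym using A W by (simp add: assoc_mult_mat[of _ p p _ p _ p])
  qed
  have c2: "col (transpose_mat ?A') 0 = w \<cdot>\<^sub>v unit_vec p 0" unfolding T
    by (rule col0_conj[OF p u u0 nu _ evT], insert A, auto)
  have e1: "\<And>a. a < p \<Longrightarrow> ?A' $$ (a,0) = (if a = 0 then w else 0)"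
  proof -
    fix a assume a: "a < p"
    have "?A' $$ (a,0) = col ?A' 0 $ a" using A' a p by (intro index_col[symmetric], auto)
    also have "\<dots> = (if a = 0 then w else 0)" unfolding c1 using a by auto
    finally show "?A' $$ (a,0) = (if a = 0 then w else 0)" .
  qed
  have e2: "\<And>a. a < p \<Longrightarrow> ?A' $$ (0,a) = (if a = 0 then w else 0)"
  proof -
    fix a assume a: "a < p"
    have "?A' $$ (0,a) = transpose_mat ?A' $$ (a,0)" using A' a p by auto
    also have "\<dots> = col (transpose_mat ?A') 0 $ a" using A' a p by auto
    finally show "?A' $$ (0,a) = (if a = 0 then w else 0)" unfolding c2 using a by auto
  qed
  show ?thesis
  proof (rule eq_matI)
    fix i k assume "i < dim_row ?F" "k < dim_col ?F"
    hence i: "i < p" and k: "k < p" using p by auto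
    show "?A' $$ (i,k) = ?F $$ (i,k)"
    proof (cases "i = 0")
      case True thus ?thesis using e2[OF k] i k p by auto
    next
      case False
      show ?thesis
      proof (cases "k = 0")
        case True thus ?thesis using e1[OF i] i k p False by auto
      next
        case False2: False
        have "?F $$ (i,k) = ?A' $$ (i - 1 + 1, k - 1 + 1)" using i k p False False2 by auto
        thus ?thesis using False False2 by auto
      qed
    qed
  qed (insert A' p, auto)
qed


definition hh :: "(nat \<Rightarrow> nat) \<Rightarrow> nat \<Rightarrow> nat" where "hh p j = p j div 2"

definition lay :: "nat \<Rightarrow> (nat \<Rightarrow> nat) \<Rightarrow> nat \<Rightarrow> nat \<times> nat \<Rightarrow> nat" where
  "lay S p n = (\<lambda>(j,a). if a < hh p j then off (hh p) j + a
      else if 2*a+1 = p j then off (hh p) S else n - 1 - (off (hh p) j + (p j - 1 - a)))"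

definition Sig :: "nat \<Rightarrow> (nat \<Rightarrow> nat) \<Rightarrow> (nat \<times> nat) set" where
  "Sig S p = Sigma {..<S} (\<lambda>j. {..<p j})"

lemma off_hh_count: "off p S = 2 * off (hh p) S + card {j. j < S \<and> odd (p j)}"
proof (induct S)
  case 0 thus ?case by (simp add: off_def)
next
  case (Suc S)
  have "{j. j < Suc S \<and> odd (p j)} = {j. j < S \<and> odd (p j)} \<union> (if odd (p S) then {S} else {})" by (auto simp: less_Suc_eq)
  hence "card {j. j < Suc S \<and> odd (p j)} = card {j. j < S \<and> odd (p j)} + (if odd (p S) then 1 else 0)"
    by (auto simp: card_insert_if)
  moreover have "p S = 2 * hh p S + (if odd (p S) then 1 else 0)" unfolding hh_def by presburger
  ultimately show ?case using Suc by (simp add: off_Suc)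
qed

lemma off_lt_bound: assumes "j < S" "a < q j" shows "off q j + a < off q S"
proof -
  have "off q j + a < off q (Suc j)" using assms by (simp add: off_Suc)
  also have "\<dots> \<le> off q S" using assms by (intro off_mono, auto)
  finally show ?thesis .
qed

lemma card_Sig: "card (Sig S p) = off p S"
  unfolding Sig_def off_def by simp

lemma finite_Sig[simp]: "finite (Sig S p)" unfolding Sig_def by auto

context
  fixes S :: nat and p :: "nat \<Rightarrow> nat" and n :: nat
  assumes n: "n = off p S" and odd1: "card {j. j < S \<and> odd (p j)} \<le> 1"
begin

private abbreviation "HH \<equiv> off (hh p) S"

private lemma n_HH: "n = 2 * HH + card {j. j < S \<and> odd (p j)}" using off_hh_count[of p S] n by simp

private lemma odd_card: assumes "j < S" "odd (p j)" shows "n = 2 * HH + 1"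
proof -
  have "card {j. j < S \<and> odd (p j)} \<noteq> 0" using assms by (subst card_0_eq, auto)
  thus ?thesis using n_HH odd1 by linarith
qed

private lemma odd_unique: assumes "j < S" "odd (p j)" "j' < S" "odd (p j')" shows "j = j'"
proof (rule ccontr)
  assume "j \<noteq> j'"
  hence "{j, j'} \<subseteq> {j. j < S \<and> odd (p j)}" using assms by auto
  from card_mono[OF _ this] \<open>j \<noteq> j'\<close> odd1 show False by auto
qed

lemma lay_range: assumes "(j,a) \<in> Sig S p" shows "lay S p n (j,a) < n"
proof -
  from assms have j: "j < S" and a: "a < p j" by (auto simp: Sig_def)
  have hp: "2 * hh p j \<le> p j" unfolding hh_def by auto
  have n1: "n > 0" using off_lt_bound[of j S a p] j a n by auto
  show ?thesis
  proof (cases "a < hh p j")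
    case True
    have "off (hh p) j + a < HH" by (rule off_lt_bound[where q="hh p", OF j True])
    thus ?thesis using True n_HH by (simp add: lay_def)
  next
    case False
    show ?thesis
    proof (cases "2*a+1 = p j")
      case True
      hence "odd (p j)" by presburger
      from odd_card[OF j this] True False show ?thesis by (simp add: lay_def)
    qed (insert False n1, auto simp: lay_def)
  qed
qed

lemma lay_inj: "inj_on (lay S p n) (Sig S p)"
proof (rule inj_onI)
  fix x y assume x: "x \<in> Sig S p" and y: "y \<in> Sig S p" and eq: "lay S p n x = lay S p n y"
  obtain j a where xx: "x = (j,a)" by force
  obtain k b where yy: "y = (k,b)" by force
  from x y xx yy have j: "j < S" and a: "a < p j" and k: "k < S" and b: "b < p k" by (auto simp: Sig_def)
  have hpj: "2 * hh p j \<le> p j" "2 * hh p k \<le> p k" unfolding hh_def by auto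
  have HHn: "HH \<le> n - HH" using n_HH by auto
  {
    fix j a assume j: "j < S" and a: "a < p j" and na: "\<not> a < hh p j" and nc: "2*a+1 \<noteq> p j"
    have 1: "p j - 1 - a < hh p j" using na nc a unfolding hh_def by presburger
    have "off (hh p) j + (p j - 1 - a) < HH" by (rule off_lt_bound[where q="hh p", OF j 1])
    hence "lay S p n (j,a) \<ge> n - HH" "lay S p n (j,a) = n - 1 - (off (hh p) j + (p j - 1 - a))"
      "off (hh p) j + (p j - 1 - a) < HH" "p j - 1 - a < hh p j"
      using na nc 1 n_HH unfolding lay_def by auto
  } note sec = this
  {
    fix j a assume j: "j < S" and a: "a < p j" and na: "\<not> a < hh p j" and c: "2*a+1 = p j"
    have "odd (p j)" using c by presburger
    hence "n = 2 * HH + 1" using odd_card[OF j] by auto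
    hence "lay S p n (j,a) = HH" "HH < n - HH" using na c unfolding lay_def by auto
  } note cen = this
  {
    fix j a assume j: "j < S" and a: "a < hh p j"
    have "lay S p n (j,a) = off (hh p) j + a" "lay S p n (j,a) < HH"
      using off_lt_bound[where q="hh p", OF j a] a unfolding lay_def by auto
  } note fst = this
  show "x = y" unfolding xx yy
  proof (cases "a < hh p j")
    case aF: True
    show "(j,a) = (k,b)"
    proof (cases "b < hh p k")
      case bF: True
      have "off (hh p) j + a = off (hh p) k + b" using eq fst[OF j aF] fst[OF k bF] xx yy by auto
      hence "blk (hh p) (off (hh p) j + a) = blk (hh p) (off (hh p) k + b)" by simp
      hence jk: "j = k" using blk_off[of a "hh p" j] blk_off[of b "hh p" k] aF bF by simp
      thus ?thesis using \<open>off (hh p) j + a = off (hh p) k + b\<close> by simp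
    next
      case bF: False
      show ?thesis
      proof (cases "2*b+1 = p k")
        case True with cen[OF k b bF True] fst[OF j aF] eq xx yy show ?thesis by auto
      next
        case False with sec[OF k b bF False] fst[OF j aF] eq xx yy HHn show ?thesis by auto
      qed
    qed
  next
    case aF: False
    show "(j,a) = (k,b)"
    proof (cases "2*a+1 = p j")
      case ac: True
      note ca = cen[OF j a aF ac]
      show ?thesis
      proof (cases "b < hh p k")
        case bF: True with ca fst[OF k bF] eq xx yy show ?thesis by auto
      next
        case bF: False
        show ?thesis
        proof (cases "2*b+1 = p k")
          case bc: True
          have "odd (p j)" "odd (p k)" using ac bc by presburger+
          from odd_unique[OF j this(1) k this(2)] have "j = k" .
          thus ?thesis using ac bc by auto
        next
          case False with sec[OF k b bF False] ca eq xx yy show ?thesis by auto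
        qed
      qed
    next
      case ac: False
      note sa = sec[OF j a aF ac]
      show ?thesis
      proof (cases "b < hh p k")
        case bF: True with sa fst[OF k bF] eq xx yy HHn show ?thesis by auto
      next
        case bF: False
        show ?thesis
        proof (cases "2*b+1 = p k")
          case bc: True with cen[OF k b bF bc] sa eq xx yy show ?thesis by auto
        next
          case bc: False
          note sb = sec[OF k b bF bc]
          have e: "n - 1 - (off (hh p) j + (p j - 1 - a)) = n - 1 - (off (hh p) k + (p k - 1 - b))"
            using sa(2) sb(2) eq xx yy by simp
          have "off (hh p) j + (p j - 1 - a) < n" "off (hh p) k + (p k - 1 - b) < n"
            using sa(3) sb(3) n_HH by auto
          with e have "off (hh p) j + (p j - 1 - a) = off (hh p) k + (p k - 1 - b)" by arith
          hence "blk (hh p) (off (hh p) j + (p j - 1 - a)) = blk (hh p) (off (hh p) k + (p k - 1 - b))" by simp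
          hence jk: "j = k" using blk_off[where q="hh p", OF sa(4)] blk_off[where q="hh p", OF sb(4)] by simp
          with \<open>off (hh p) j + (p j - 1 - a) = off (hh p) k + (p k - 1 - b)\<close> a b show ?thesis by auto
        qed
      qed
    qed
  qed
qed

lemma lay_bij: "bij_betw (lay S p n) (Sig S p) {..<n}"
proof -
  have sub: "lay S p n ` Sig S p \<subseteq> {..<n}" using lay_range by auto
  have "card (lay S p n ` Sig S p) = card {..<n}"
    using card_image[OF lay_inj] card_Sig n by simp
  hence "lay S p n ` Sig S p = {..<n}" using sub by (intro card_subset_eq, auto)
  thus ?thesis using lay_inj unfolding bij_betw_def by auto
qed

lemma lay_mirror: assumes "(j,a) \<in> Sig S p"
  shows "lay S p n (j, p j - 1 - a) = n - 1 - lay S p n (j,a)"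
proof -
  from assms have j: "j < S" and a: "a < p j" by (auto simp: Sig_def)
  have rng: "lay S p n (j,a) < n" by (rule lay_range[OF assms])
  show ?thesis
  proof (cases "a < hh p j")
    case aF: True
    have 1: "\<not> p j - 1 - a < hh p j" using aF a unfolding hh_def by auto
    have 2: "2 * (p j - 1 - a) + 1 \<noteq> p j" using aF a unfolding hh_def by presburger
    have 3: "p j - 1 - (p j - 1 - a) = a" using a by auto
    show ?thesis using aF 1 2 3 unfolding lay_def by simp
  next
    case aF: False
    show ?thesis
    proof (cases "2*a+1 = p j")
      case True
      have "odd (p j)" using True by presburger
      hence "n = 2 * HH + 1" using odd_card[OF j] by auto
      moreover have "p j - 1 - a = a" using True by auto
      ultimately show ?thesis using aF True unfolding lay_def by auto
    next
      case False
      have 1: "p j - 1 - a < hh p j" using aF False a unfolding hh_def by presburger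
      have "off (hh p) j + (p j - 1 - a) < HH" by (rule off_lt_bound[where q="hh p", OF j 1])
      hence "off (hh p) j + (p j - 1 - a) < n" using n_HH by auto
      thus ?thesis using aF False 1 unfolding lay_def by auto
    qed
  qed
qed

end


definition lmat :: "nat \<Rightarrow> (nat \<Rightarrow> 'x) \<Rightarrow> ('x \<Rightarrow> 'x \<Rightarrow> 'a) \<Rightarrow> 'a mat" where
  "lmat n dec F = mat n n (\<lambda>(i,k). F (dec i) (dec k))"

lemma lmat_carrier[simp]: "lmat n dec F \<in> carrier_mat n n" "dim_row (lmat n dec F) = n" "dim_col (lmat n dec F) = n"
  unfolding lmat_def by auto

lemma lmat_index[simp]: "i < n \<Longrightarrow> k < n \<Longrightarrow> lmat n dec F $$ (i,k) = F (dec i) (dec k)"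
  unfolding lmat_def by auto

lemma lmat_transpose: "transpose_mat (lmat n dec F) = lmat n dec (\<lambda>x y. F y x)"
  by (rule eq_matI, auto)

lemma lmat_cong: assumes "\<And>i. i < n \<Longrightarrow> dec i \<in> X" and "\<And>x y. x \<in> X \<Longrightarrow> y \<in> X \<Longrightarrow> F x y = G x y"
  shows "lmat n dec F = lmat n dec G"
  by (rule eq_matI, insert assms, auto)

lemma lmat_mult: assumes bij: "bij_betw \<iota> X {..<n}" and dec: "dec = inv_into X \<iota>"
  shows "lmat n dec F * lmat n dec G = lmat n dec (\<lambda>x y. \<Sum>z\<in>X. F x z * G z y)"
proof (rule eq_matI)
  fix i k assume ik: "i < dim_row (lmat n dec (\<lambda>x y. \<Sum>z\<in>X. F x z * G z y))" "k < dim_col (lmat n dec (\<lambda>x y. \<Sum>z\<in>X. F x z * G z y))"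
  hence i: "i < n" and k: "k < n" by auto
  have inj: "inj_on \<iota> X" using bij by (auto simp: bij_betw_def)
  have "(lmat n dec F * lmat n dec G) $$ (i,k) = (\<Sum>l\<in>{..<n}. F (dec i) (dec l) * G (dec l) (dec k))"
    using i k by (auto simp: scalar_prod_def lessThan_atLeast0)
  also have "\<dots> = (\<Sum>z\<in>X. F (dec i) (dec (\<iota> z)) * G (dec (\<iota> z)) (dec k))"
    by (rule sum.reindex_bij_betw[OF bij, symmetric])
  also have "\<dots> = (\<Sum>z\<in>X. F (dec i) z * G z (dec k))"
    by (rule sum.cong, auto simp: dec inv_into_f_f[OF inj])
  finally show "(lmat n dec F * lmat n dec G) $$ (i,k) = lmat n dec (\<lambda>x y. \<Sum>z\<in>X. F x z * G z y) $$ (i,k)"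
    using i k by simp
qed auto

lemma sig_sum: "(\<Sum>z\<in>Sig S p. f z) = (\<Sum>l<S. \<Sum>c<p l. f (l,c))"
  unfolding Sig_def by (subst sum.Sigma, auto)

lemma sig_delta: assumes "j < S" shows "(\<Sum>z\<in>Sig S p. if fst z = j then g (snd z) else 0) = (\<Sum>c<p j. g c)"
proof -
  have "(\<Sum>z\<in>Sig S p. if fst z = j then g (snd z) else 0) = (\<Sum>l<S. if l = j then (\<Sum>c<p l. g c) else 0)"
    unfolding sig_sum by (rule sum.cong, auto)
  also have "\<dots> = (\<Sum>c<p j. g c)" using assms by (simp add: sum.delta')
  finally show ?thesis .
qed

lemma rev_id_conj: assumes X: "X \<in> carrier_mat n n" and i: "i < n" and k: "k < n"
  shows "(rev_id n * X * rev_id n) $$ (i,k) = X $$ (n - 1 - i, n - 1 - k)"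
proof -
  have J: "rev_id n \<in> carrier_mat n n" unfolding rev_id_def by auto
  have JX: "rev_id n * X = mat n n (\<lambda>(i,k). X $$ (n - 1 - i, k))"
  proof (rule eq_matI)
    fix i k assume "i < dim_row (mat n n (\<lambda>(i,k). X $$ (n - 1 - i, k)))" "k < dim_col (mat n n (\<lambda>(i,k). X $$ (n - 1 - i, k)))"
    hence i: "i < n" and k: "k < n" by auto
    have "(rev_id n * X) $$ (i,k) = (\<Sum>l = 0..<n. (if i + l = n - 1 then 1 else 0) * X $$ (l,k))"
      using i k X by (auto simp: rev_id_def scalar_prod_def)
    also have "\<dots> = (\<Sum>l = 0..<n. (if l = n - 1 - i then X $$ (l,k) else 0))"
      by (rule sum.cong, insert i, auto)
    also have "\<dots> = X $$ (n - 1 - i, k)" using i by (simp add: sum.delta')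
    finally show "(rev_id n * X) $$ (i,k) = mat n n (\<lambda>(i,k). X $$ (n - 1 - i, k)) $$ (i,k)" using i k by simp
  qed (insert X, auto simp: rev_id_def)
  have "(rev_id n * X * rev_id n) $$ (i,k) = (\<Sum>l = 0..<n. X $$ (n - 1 - i, l) * (if l + k = n - 1 then 1 else 0))"
    unfolding JX using i k X by (auto simp: rev_id_def scalar_prod_def)
  also have "\<dots> = (\<Sum>l = 0..<n. (if l = n - 1 - k then X $$ (n - 1 - i, l) else 0))"
    by (rule sum.cong, insert k, auto)
  also have "\<dots> = X $$ (n - 1 - i, n - 1 - k)" using k by (simp add: sum.delta')
  finally show ?thesis .
qed

lemma cpr_sim: assumes X: "X \<in> carrier_mat n n" and Y: "Y \<in> carrier_mat n n" and P: "P \<in> carrier_mat n n" and Q: "Q \<in> carrier_mat n n"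
  and PQ: "P * Q = 1\<^sub>m n" and QP: "Q * P = 1\<^sub>m n" and eq: "X = P * Y * Q"
  shows "cpr X = cpr Y"
proof -
  let ?m = "map_mat complex_of_real"
  have "similar_mat (?m X) (?m Y)"
  proof (rule similar_matI[where n=n and P="?m P" and Q="?m Q"])
    show "{?m X, ?m Y, ?m P, ?m Q} \<subseteq> carrier_mat n n" using X Y P Q by auto
    have h1: "?m (P * Q) = ?m P * ?m Q" by (rule of_real_hom.mat_hom_mult[OF P Q])
    have h2: "?m (Q * P) = ?m Q * ?m P" by (rule of_real_hom.mat_hom_mult[OF Q P])
    have h3: "?m (1\<^sub>m n) = 1\<^sub>m n" by (rule eq_matI, auto)
    show "?m P * ?m Q = 1\<^sub>m n" using h1 h3 PQ by simp
    show "?m Q * ?m P = 1\<^sub>m n" using h2 h3 QP by simp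
    have h4: "?m (P * Y * Q) = ?m (P * Y) * ?m Q" by (rule of_real_hom.mat_hom_mult[OF mult_carrier_mat[OF P Y] Q])
    have h5: "?m (P * Y) = ?m P * ?m Y" by (rule of_real_hom.mat_hom_mult[OF P Y])
    show "?m X = ?m P * ?m Y * ?m Q" unfolding eq h4 h5 ..
  qed
  thus ?thesis unfolding cpr_def by (rule char_poly_similar)
qed

lemma cpr_reidx: assumes f: "bij_betw f {..<n} {..<n}" and X: "X \<in> carrier_mat n n"
  shows "cpr (reidx f n X) = cpr X"
proof -
  have fi: "\<And>i. i < n \<Longrightarrow> f i < n" using f by (auto simp: bij_betw_def)
  have "map_mat complex_of_real (reidx f n X) = reidx f n (map_mat complex_of_real X)"
    by (rule eq_matI, insert X fi, auto)
  thus ?thesis unfolding cpr_def using char_poly_similar[OF reidx_similar[OF f, of "map_mat complex_of_real X"]] X by simp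
qed

lemma reidx_mult: assumes f: "bij_betw f {..<n} {..<n}" and X: "X \<in> carrier_mat n n" and Y: "Y \<in> carrier_mat n n"
  shows "reidx f n (X * Y) = reidx f n X * reidx f n (Y :: 'a :: comm_semiring_0 mat)"
proof (rule eq_matI)
  fix i k assume "i < dim_row (reidx f n X * reidx f n Y)" "k < dim_col (reidx f n X * reidx f n Y)"
  hence i: "i < n" and k: "k < n" by auto
  have fi: "f i < n" "f k < n" using f i k by (auto simp: bij_betw_def)
  have "reidx f n (X * Y) $$ (i,k) = (\<Sum>l = 0..<n. X $$ (f i, l) * Y $$ (l, f k))"
    using i k fi X Y by (auto simp: scalar_prod_def)
  also have "\<dots> = (\<Sum>l = 0..<n. X $$ (f i, f l) * Y $$ (f l, f k))"
    by (rule bij_sum_reindex[OF f, symmetric])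
  also have "\<dots> = (reidx f n X * reidx f n Y) $$ (i,k)" using i k X Y by (auto simp: scalar_prod_def)
  finally show "reidx f n (X * Y) $$ (i,k) = (reidx f n X * reidx f n Y) $$ (i,k)" .
qed auto

lemma reidx_transpose: assumes f: "bij_betw f {..<n} {..<n}" and X: "X \<in> carrier_mat n n"
  shows "transpose_mat (reidx f n X) = reidx f n (transpose_mat X)"
proof -
  have fi: "\<And>i. i < n \<Longrightarrow> f i < n" using f by (auto simp: bij_betw_def)
  show ?thesis by (rule eq_matI, insert fi X, auto)
qed

lemma normal_reidx: assumes f: "bij_betw f {..<n} {..<n}" and X: "X \<in> carrier_mat n n" and N: "normal_mat X"
  shows "normal_mat (reidx f n X)"
  unfolding normal_mat_def reidx_transpose[OF f X]
  using N X by (simp add: reidx_mult[OF f, symmetric] normal_mat_def)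

lemma normal_conj: assumes P: "P \<in> carrier_mat n n" and Y: "Y \<in> carrier_mat n n"
  and PP: "P * P = 1\<^sub>m n" and PT: "transpose_mat P = P" and N: "normal_mat Y"
  shows "normal_mat (P * Y * P)"
proof -
  have YT: "transpose_mat Y \<in> carrier_mat n n" using Y by auto
  have T: "transpose_mat (P * Y * P) = P * transpose_mat Y * P"
  proof -
    have "transpose_mat (P * Y * P) = transpose_mat P * transpose_mat (P * Y)"
      using P Y by (intro transpose_mult, auto)
    also have "transpose_mat (P * Y) = transpose_mat Y * transpose_mat P"
      using P Y by (intro transpose_mult, auto)
    finally show ?thesis unfolding PT using P Y by (simp add: assoc_mult_mat[of _ n n _ n _ n])
  qed
  have gen: "\<And>Z1 Z2. Z1 \<in> carrier_mat n n \<Longrightarrow> Z2 \<in> carrier_mat n n \<Longrightarrow> (P * Z1 * P) * (P * Z2 * P) = P * (Z1 * Z2) * P"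
  proof -
    fix Z1 Z2 :: "real mat" assume Z1: "Z1 \<in> carrier_mat n n" and Z2: "Z2 \<in> carrier_mat n n"
    have "(P * Z1 * P) * (P * Z2 * P) = P * Z1 * (P * P) * Z2 * P"
      using P Z1 Z2 by (simp add: assoc_mult_mat[of _ n n _ n _ n])
    also have "\<dots> = P * (Z1 * Z2) * P" unfolding PP using P Z1 Z2 by (simp add: assoc_mult_mat[of _ n n _ n _ n])
    finally show "(P * Z1 * P) * (P * Z2 * P) = P * (Z1 * Z2) * P" .
  qed
  show ?thesis unfolding normal_mat_def T gen[OF Y YT] gen[OF YT Y] using N unfolding normal_mat_def by simp
qed

lemma cpr_scalar1: "cpr (w \<cdot>\<^sub>m 1\<^sub>m 1) = [:- complex_of_real w, 1:]"
proof -
  let ?X = "map_mat complex_of_real (w \<cdot>\<^sub>m 1\<^sub>m 1)"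
  have X: "?X \<in> carrier_mat 1 1" by auto
  have "upper_triangular ?X" by (auto simp: upper_triangular_def)
  from char_poly_upper_triangular[OF X this] show ?thesis unfolding cpr_def
    by (simp add: diag_mat_def)
qed


locale asm =
  fixes S :: nat and p :: "nat \<Rightarrow> nat" and n :: nat
    and A :: "nat \<Rightarrow> real mat" and u :: "nat \<Rightarrow> real vec" and w :: "nat \<Rightarrow> real" and Bp :: "real mat"
  assumes n_def: "n = off p S" and odd1: "card {j. j < S \<and> odd (p j)} \<le> 1"
    and ppos: "\<And>j. j < S \<Longrightarrow> p j > 0"
    and Acar: "\<And>j. j < S \<Longrightarrow> A j \<in> carrier_mat (p j) (p j)"
    and ucar: "\<And>j. j < S \<Longrightarrow> u j \<in> carrier_vec (p j)"
    and unn: "\<And>j a. j < S \<Longrightarrow> a < p j \<Longrightarrow> u j $ a \<ge> 0"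
    and unorm: "\<And>j. j < S \<Longrightarrow> u j \<bullet> u j = 1"
    and uev: "\<And>j. j < S \<Longrightarrow> A j *\<^sub>v u j = w j \<cdot>\<^sub>v u j"
    and uevT: "\<And>j. j < S \<Longrightarrow> transpose_mat (A j) *\<^sub>v u j = w j \<cdot>\<^sub>v u j"
    and Anorm: "\<And>j. j < S \<Longrightarrow> normal_mat (A j)"
    and Ann: "\<And>j a b. j < S \<Longrightarrow> a < p j \<Longrightarrow> b < p j \<Longrightarrow> A j $$ (a,b) \<ge> 0"
    and Acs: "\<And>j a b. j < S \<Longrightarrow> a < p j \<Longrightarrow> b < p j \<Longrightarrow> A j $$ (p j - 1 - a, p j - 1 - b) = A j $$ (a,b)"
    and usym: "\<And>j a. j < S \<Longrightarrow> a < p j \<Longrightarrow> u j $ (p j - 1 - a) = u j $ a"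
    and Bcar: "Bp \<in> carrier_mat S S" and Bnorm: "normal_mat Bp"
    and Bnn: "\<And>j k. j < S \<Longrightarrow> k < S \<Longrightarrow> Bp $$ (j,k) \<ge> 0"
    and Bdiag: "\<And>j. j < S \<Longrightarrow> Bp $$ (j,j) = w j"
begin

definition dec where "dec = inv_into (Sig S p) (lay S p n)"
definition W where "W j = hhW (p j) (u j)"
definition A' where "A' j = W j * A j * W j"
definition A2 where "A2 j = mat (p j - 1) (p j - 1) (\<lambda>(i,k). A' j $$ (i+1,k+1))"
definition M where "M j k = Bp $$ (j,k) - (if j = k then w j else 0)"
definition Tf where "Tf x y = (if fst x = fst y then W (fst x) $$ (snd x, snd y) else 0)"
definition Hf where "Hf x y = (if fst x = fst y then A' (fst x) $$ (snd x, snd y) else 0)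
   + (if snd x = 0 \<and> snd y = 0 then M (fst x) (fst y) else 0)"
definition Cf where "Cf x y = (if fst x = fst y then A (fst x) $$ (snd x, snd y) else 0)
   + u (fst x) $ snd x * M (fst x) (fst y) * u (fst y) $ snd y"
definition T where "T = lmat n dec Tf"
definition H where "H = lmat n dec Hf"
definition C where "C = lmat n dec Cf"
definition q where "q j = p j - 1"
definition Hcp where "Hcp = four_block_mat Bp (0\<^sub>m S (n - S)) (0\<^sub>m (n - S) S) (bd S q A2)"
definition kap where "kap x = (if snd x = 0 then fst x else S + off q (fst x) + (snd x - 1))"
definition phi where "phi i = kap (dec i)"

lemma bij: "bij_betw (lay S p n) (Sig S p) {..<n}"
  by (rule lay_bij[OF n_def odd1])

lemma inj: "inj_on (lay S p n) (Sig S p)" using bij by (auto simp: bij_betw_def)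

lemma dec_bij: "bij_betw dec {..<n} (Sig S p)"
  unfolding dec_def by (rule bij_betw_inv_into[OF bij])

lemma dec_mem: "i < n \<Longrightarrow> dec i \<in> Sig S p" using dec_bij by (auto simp: bij_betw_def)

lemma dec_lay: "x \<in> Sig S p \<Longrightarrow> dec (lay S p n x) = x"
  unfolding dec_def by (rule inv_into_f_f[OF inj])

lemma lay_dec: "i < n \<Longrightarrow> lay S p n (dec i) = i"
  unfolding dec_def using bij by (intro f_inv_into_f, auto simp: bij_betw_def)

lemma dec_inj: "i < n \<Longrightarrow> k < n \<Longrightarrow> dec i = dec k \<Longrightarrow> i = k"
  using lay_dec by metis

lemma n_q: "n = S + off q S"
  unfolding n_def off_def q_def using ppos by (induct S, auto)

lemma mult_l: "lmat n dec F * lmat n dec G = lmat n dec (\<lambda>x y. \<Sum>z\<in>Sig S p. F x z * G z y)"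
  by (rule lmat_mult[OF bij dec_def])

lemma cong_l: assumes "\<And>j a k b. j < S \<Longrightarrow> a < p j \<Longrightarrow> k < S \<Longrightarrow> b < p k \<Longrightarrow> F (j,a) (k,b) = G (j,a) (k,b)"
  shows "lmat n dec F = lmat n dec G"
  by (rule lmat_cong[OF dec_mem], insert assms, auto simp: Sig_def)

lemma W_props: assumes j: "j < S"
  shows "W j \<in> carrier_mat (p j) (p j)" "W j * W j = 1\<^sub>m (p j)" "transpose_mat (W j) = W j"
    "\<And>a. a < p j \<Longrightarrow> W j $$ (a,0) = u j $ a" "\<And>a. a < p j \<Longrightarrow> W j $$ (0,a) = u j $ a"
proof -
  have p: "p j > 0" by (rule ppos[OF j])
  have u0: "u j $ 0 \<ge> 0" using unn[OF j p] .
  show "W j \<in> carrier_mat (p j) (p j)" unfolding W_def by simp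
  show "W j * W j = 1\<^sub>m (p j)" unfolding W_def by (rule hhW_sq[OF p ucar[OF j] u0 unorm[OF j]])
  show T: "transpose_mat (W j) = W j" unfolding W_def by (rule hhW_sym)
  show c: "\<And>a. a < p j \<Longrightarrow> W j $$ (a,0) = u j $ a" unfolding W_def by (rule hhW_col0[OF p u0])
  fix a assume a: "a < p j"
  have "W j $$ (0,a) = transpose_mat (W j) $$ (a,0)" using a p unfolding W_def by simp
  thus "W j $$ (0,a) = u j $ a" unfolding T using c[OF a] by simp
qed

lemma A'_form: assumes j: "j < S"
  shows "A' j = four_block_mat (w j \<cdot>\<^sub>m 1\<^sub>m 1) (0\<^sub>m 1 (p j - 1)) (0\<^sub>m (p j - 1) 1) (A2 j)"
  unfolding A'_def A2_def W_def
  by (rule block_form[OF Acar[OF j] ppos[OF j] ucar[OF j] unn[OF j ppos[OF j]] unorm[OF j] uev[OF j] uevT[OF j]])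

lemma A2_car: "A2 j \<in> carrier_mat (q j) (q j)" unfolding A2_def q_def by auto

lemma A'_car: assumes j: "j < S" shows "A' j \<in> carrier_mat (p j) (p j)"
  unfolding A'_def using W_props(1)[OF j] Acar[OF j] by auto

lemma A'_entries: assumes j: "j < S"
  shows "A' j $$ (0,0) = w j" "\<And>b. 0 < b \<Longrightarrow> b < p j \<Longrightarrow> A' j $$ (0,b) = 0"
   "\<And>a. 0 < a \<Longrightarrow> a < p j \<Longrightarrow> A' j $$ (a,0) = 0"
   "\<And>a b. 0 < a \<Longrightarrow> a < p j \<Longrightarrow> 0 < b \<Longrightarrow> b < p j \<Longrightarrow> A' j $$ (a,b) = A2 j $$ (a - 1, b - 1)"
proof -
  have p: "p j > 0" by (rule ppos[OF j])
  note F = A'_form[OF j]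
  show "A' j $$ (0,0) = w j" unfolding F using p by (simp add: A2_def)
  show "\<And>b. 0 < b \<Longrightarrow> b < p j \<Longrightarrow> A' j $$ (0,b) = 0" unfolding F using p by (simp add: A2_def)
  show "\<And>a. 0 < a \<Longrightarrow> a < p j \<Longrightarrow> A' j $$ (a,0) = 0" unfolding F using p by (simp add: A2_def)
  show "\<And>a b. 0 < a \<Longrightarrow> a < p j \<Longrightarrow> 0 < b \<Longrightarrow> b < p j \<Longrightarrow> A' j $$ (a,b) = A2 j $$ (a - 1, b - 1)"
    unfolding F using p by (simp add: A2_def)
qed

lemma WA'W: assumes j: "j < S" shows "W j * A' j * W j = A j"
proof -
  note Wp = W_props[OF j]
  have Wc: "W j \<in> carrier_mat (p j) (p j)" by (rule Wp(1))
  have Ac: "A j \<in> carrier_mat (p j) (p j)" by (rule Acar[OF j])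
  have "W j * A' j * W j = (W j * W j) * A j * (W j * W j)"
    unfolding A'_def using Wc Ac by (simp add: assoc_mult_mat[of _ "p j" "p j" _ "p j" _ "p j"])
  thus ?thesis unfolding Wp(2) using Ac by simp
qed


definition THf where "THf x y = (if fst x = fst y then (W (fst x) * A' (fst x)) $$ (snd x, snd y) else 0)
   + (if snd y = 0 then u (fst x) $ snd x * M (fst x) (fst y) else 0)"

lemma mult_entry: assumes "X \<in> carrier_mat m m" "Y \<in> carrier_mat m m" "a < m" "b < m"
  shows "(X * Y) $$ (a,b) = (\<Sum>c<m. X $$ (a,c) * Y $$ (c,b))"
  using assms by (auto simp: scalar_prod_def lessThan_atLeast0)

lemma TH: "T * H = lmat n dec THf"
  unfolding T_def H_def mult_l
proof (rule cong_l)
  fix j a k b assume j: "j < S" and a: "a < p j" and k: "k < S" and b: "b < p k"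
  have p: "p j > 0" using ppos[OF j] .
  have "(\<Sum>z\<in>Sig S p. Tf (j,a) z * Hf z (k,b)) = (\<Sum>z\<in>Sig S p. if fst z = j then W j $$ (a, snd z) * Hf (j, snd z) (k,b) else 0)"
    by (rule sum.cong, auto simp: Tf_def)
  also have "\<dots> = (\<Sum>c<p j. W j $$ (a, c) * Hf (j, c) (k,b))" by (rule sig_delta[OF j])
  also have "\<dots> = (\<Sum>c<p j. (if j = k then W j $$ (a, c) * A' j $$ (c,b) else 0) + (if c = 0 then (if b = 0 then W j $$ (a,c) * M j k else 0) else 0))"
    by (rule sum.cong, auto simp: Hf_def algebra_simps)
  also have "\<dots> = (if j = k then (\<Sum>c<p j. W j $$ (a, c) * A' j $$ (c,b)) else 0) + (if b = 0 then W j $$ (a,0) * M j k else 0)"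
    using p by (simp add: sum.distrib sum.delta)
  also have "\<dots> = THf (j,a) (k,b)"
  proof -
    have "j = k \<Longrightarrow> (\<Sum>c<p j. W j $$ (a, c) * A' j $$ (c,b)) = (W j * A' j) $$ (a,b)"
      using mult_entry[OF W_props(1)[OF j] A'_car[OF j] a] b by simp
    thus ?thesis unfolding THf_def using W_props(4)[OF j a] by auto
  qed
  finally show "(\<Sum>z\<in>Sig S p. Tf (j,a) z * Hf z (k,b)) = THf (j,a) (k,b)" .
qed

lemma THT: "T * H * T = C"
  unfolding TH unfolding T_def C_def mult_l
proof (rule cong_l)
  fix j a k b assume j: "j < S" and a: "a < p j" and k: "k < S" and b: "b < p k"
  have p: "p k > 0" using ppos[OF k] .
  have "(\<Sum>z\<in>Sig S p. THf (j,a) z * Tf z (k,b)) = (\<Sum>z\<in>Sig S p. if fst z = k then THf (j,a) (k, snd z) * W k $$ (snd z, b) else 0)"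
    by (rule sum.cong, auto simp: Tf_def)
  also have "\<dots> = (\<Sum>c<p k. THf (j,a) (k, c) * W k $$ (c, b))" by (rule sig_delta[OF k])
  also have "\<dots> = (\<Sum>c<p k. (if j = k then (W j * A' j) $$ (a, c) * W k $$ (c,b) else 0) + (if c = 0 then u j $ a * M j k * W k $$ (c,b) else 0))"
    by (rule sum.cong, auto simp: THf_def algebra_simps)
  also have "\<dots> = (if j = k then (\<Sum>c<p k. (W j * A' j) $$ (a, c) * W k $$ (c,b)) else 0) + u j $ a * M j k * W k $$ (0,b)"
    using p by (simp add: sum.distrib sum.delta)
  also have "\<dots> = Cf (j,a) (k,b)"
  proof -
    have "j = k \<Longrightarrow> (\<Sum>c<p k. (W j * A' j) $$ (a, c) * W k $$ (c,b)) = A j $$ (a,b)"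
      using mult_entry[of "W j * A' j" "p j" "W j" a b, OF _ W_props(1)[OF j] a] b W_props(1)[OF j] A'_car[OF j]
        WA'W[OF j] by auto
    thus ?thesis unfolding Cf_def using W_props(5)[OF k b] by auto
  qed
  finally show "(\<Sum>z\<in>Sig S p. THf (j,a) z * Tf z (k,b)) = Cf (j,a) (k,b)" .
qed

lemma TT: "T * T = 1\<^sub>m n"
proof -
  have "T * T = lmat n dec (\<lambda>x y. if x = y then 1 else 0)"
    unfolding T_def mult_l
  proof (rule cong_l)
    fix j a k b assume j: "j < S" and a: "a < p j" and k: "k < S" and b: "b < p k"
    have "(\<Sum>z\<in>Sig S p. Tf (j,a) z * Tf z (k,b)) = (\<Sum>z\<in>Sig S p. if fst z = j then W j $$ (a, snd z) * Tf (j, snd z) (k,b) else 0)"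
      by (rule sum.cong, auto simp: Tf_def)
    also have "\<dots> = (\<Sum>c<p j. W j $$ (a, c) * Tf (j, c) (k,b))" by (rule sig_delta[OF j])
    also have "\<dots> = (if j = k then (\<Sum>c<p j. W j $$ (a, c) * W j $$ (c,b)) else 0)"
      by (auto simp: Tf_def)
    also have "\<dots> = (if (j,a) = (k,b) then 1 else 0)"
    proof (cases "j = k")
      case True
      have "(\<Sum>c<p j. W j $$ (a, c) * W j $$ (c,b)) = (W j * W j) $$ (a,b)"
        using mult_entry[OF W_props(1)[OF j] W_props(1)[OF j] a] b True by simp
      thus ?thesis unfolding W_props(2)[OF j] using True a b by auto
    qed auto
    finally show "(\<Sum>z\<in>Sig S p. Tf (j,a) z * Tf z (k,b)) = (if (j,a) = (k,b) then 1 else 0)" .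
  qed
  also have "\<dots> = 1\<^sub>m n" by (rule eq_matI, auto dest: dec_inj)
  finally show ?thesis .
qed


lemma kap_bij: "bij_betw kap (Sig S p) {..<n}"
proof -
  have inj: "inj_on kap (Sig S p)"
  proof (rule inj_onI)
    fix x y assume x: "x \<in> Sig S p" and y: "y \<in> Sig S p" and eq: "kap x = kap y"
    obtain j a where xx: "x = (j,a)" by force
    obtain k b where yy: "y = (k,b)" by force
    from x y xx yy have j: "j < S" and a: "a < p j" and k: "k < S" and b: "b < p k" by (auto simp: Sig_def)
    show "x = y"
    proof (cases "a = 0")
      case a0: True
      show ?thesis
      proof (cases "b = 0")
        case True with a0 eq xx yy show ?thesis by (auto simp: kap_def)
      next
        case False with a0 eq xx yy j show ?thesis by (auto simp: kap_def)
      qed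
    next
      case a0: False
      show ?thesis
      proof (cases "b = 0")
        case True with a0 eq xx yy k show ?thesis by (auto simp: kap_def)
      next
        case b0: False
        have e: "off q j + (a - 1) = off q k + (b - 1)" using eq a0 b0 xx yy by (auto simp: kap_def)
        have a1: "a - 1 < q j" using a a0 by (auto simp: q_def)
        have b1: "b - 1 < q k" using b b0 by (auto simp: q_def)
        have "j = k" using arg_cong[OF e, of "blk q"] blk_off[where q=q, OF a1] blk_off[where q=q, OF b1] by simp
        with e a0 b0 xx yy show ?thesis by auto
      qed
    qed
  qed
  have sub: "kap ` Sig S p \<subseteq> {..<n}"
  proof
    fix z assume "z \<in> kap ` Sig S p"
    then obtain j a where z: "z = kap (j,a)" and j: "j < S" and a: "a < p j" by (auto simp: Sig_def)
    show "z \<in> {..<n}"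
    proof (cases "a = 0")
      case True thus ?thesis using z j n_q by (auto simp: kap_def)
    next
      case False
      have a1: "a - 1 < q j" using a False by (auto simp: q_def)
      from off_lt_bound[OF j, where q=q, OF a1] False z n_q show ?thesis by (auto simp: kap_def)
    qed
  qed
  have "card (kap ` Sig S p) = card {..<n}" using card_image[OF inj] card_Sig n_def by simp
  hence "kap ` Sig S p = {..<n}" using sub by (intro card_subset_eq, auto)
  thus ?thesis using inj unfolding bij_betw_def by auto
qed

lemma phi_bij: "bij_betw phi {..<n} {..<n}"
proof -
  have "phi = kap \<circ> dec" unfolding phi_def by auto
  thus ?thesis using bij_betw_trans[OF dec_bij kap_bij] by simp
qed

lemma bd_car': "bd S q A2 \<in> carrier_mat (n - S) (n - S)" using n_q by simp

lemma Hcp_car: "Hcp \<in> carrier_mat n n" unfolding Hcp_def using Bcar bd_car' n_q by auto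

lemma H_reidx: "H = reidx phi n Hcp"
proof (rule eq_matI)
  fix i k assume "i < dim_row (reidx phi n Hcp)" "k < dim_col (reidx phi n Hcp)"
  hence i: "i < n" and k: "k < n" by auto
  obtain j a where di: "dec i = (j,a)" by force
  obtain l b where dk: "dec k = (l,b)" by force
  from dec_mem[OF i] dec_mem[OF k] di dk have j: "j < S" and a: "a < p j" and l: "l < S" and b: "b < p l"
    by (auto simp: Sig_def)
  have nS: "n - S = off q S" using n_q by simp
  have Bd: "dim_row Bp = S" "dim_col Bp = S" using Bcar by auto
  have ri: "reidx phi n Hcp $$ (i,k) = Hcp $$ (kap (j,a), kap (l,b))" using i k di dk by (simp add: phi_def)
  have hi: "H $$ (i,k) = Hf (j,a) (l,b)" using i k di dk by (simp add: H_def)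
  note Ae = A'_entries
  show "H $$ (i,k) = reidx phi n Hcp $$ (i,k)" unfolding ri hi
  proof (cases "a = 0")
    case a0: True
    show "Hf (j,a) (l,b) = Hcp $$ (kap (j,a), kap (l,b))"
    proof (cases "b = 0")
      case b0: True
      show ?thesis using a0 b0 j l Ae(1)[OF j] Bd unfolding Hcp_def Hf_def kap_def M_def by auto
    next
      case b0: False
      have b1: "b - 1 < q l" using b b0 by (auto simp: q_def)
      have "off q l + (b - 1) < off q S" using off_lt_bound[OF l, where q=q, OF b1] .
      thus ?thesis using a0 b0 j l b Ae(2)[OF j, of b] Bd nS unfolding Hcp_def Hf_def kap_def by auto
    qed
  next
    case a0: False
    have a1: "a - 1 < q j" using a a0 by (auto simp: q_def)
    have oa: "off q j + (a - 1) < off q S" using off_lt_bound[OF j, where q=q, OF a1] .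
    show "Hf (j,a) (l,b) = Hcp $$ (kap (j,a), kap (l,b))"
    proof (cases "b = 0")
      case b0: True
      thus ?thesis using a0 b0 j l a oa Ae(3)[OF j, of a] Bd nS unfolding Hcp_def Hf_def kap_def by auto
    next
      case b0: False
      have b1: "b - 1 < q l" using b b0 by (auto simp: q_def)
      have ob: "off q l + (b - 1) < off q S" using off_lt_bound[OF l, where q=q, OF b1] .
      have "Hcp $$ (kap (j,a), kap (l,b)) = bd S q A2 $$ (off q j + (a - 1), off q l + (b - 1))"
        using a0 b0 oa ob Bd nS unfolding Hcp_def kap_def by auto
      also have "\<dots> = (if j = l then A2 j $$ (a - 1, b - 1) else 0)"
        by (rule bd_index[OF j a1 l b1])
      also have "\<dots> = Hf (j,a) (l,b)" using Ae(4)[OF j, of a b] a0 b0 a b unfolding Hf_def by auto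
      finally show ?thesis by simp
    qed
  qed
qed (auto simp: H_def)


lemma T_car: "T \<in> carrier_mat n n" unfolding T_def by simp
lemma H_car: "H \<in> carrier_mat n n" unfolding H_def by simp
lemma C_car: "C \<in> carrier_mat n n" unfolding C_def by simp

lemma T_sym: "transpose_mat T = T"
  unfolding T_def lmat_transpose
proof (rule cong_l)
  fix j a k b assume j: "j < S" and a: "a < p j" and k: "k < S" and b: "b < p k"
  show "Tf (k,b) (j,a) = Tf (j,a) (k,b)"
  proof (cases "j = k")
    case True
    have "W j $$ (b,a) = transpose_mat (W j) $$ (a,b)" using W_props(1)[OF j] a b True by simp
    thus ?thesis unfolding Tf_def W_props(3)[OF j] using True by simp
  qed (auto simp: Tf_def)
qed

lemma cpr_C: "cpr C = cpr Bp * (\<Prod>j<S. cpr (A2 j))"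
proof -
  have "cpr C = cpr H" by (rule cpr_sim[OF C_car H_car T_car T_car TT TT THT[symmetric]])
  also have "\<dots> = cpr Hcp" unfolding H_reidx by (rule cpr_reidx[OF phi_bij Hcp_car])
  also have "\<dots> = cpr Bp * cpr (bd S q A2)" unfolding Hcp_def using n_q
    by (intro cpr_four_block_diag[OF Bcar], simp)
  also have "cpr (bd S q A2) = (\<Prod>j<S. cpr (A2 j))" by (rule cpr_bd, rule A2_car)
  finally show ?thesis .
qed

lemma block_cpr: assumes j: "j < S" shows "cpr (A j) = [:- complex_of_real (w j), 1:] * cpr (A2 j)"
proof -
  have "cpr (A j) = cpr (A' j)"
    by (rule cpr_sim[OF Acar[OF j] A'_car[OF j] W_props(1)[OF j] W_props(1)[OF j] W_props(2)[OF j] W_props(2)[OF j] WA'W[OF j, symmetric]])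
  also have "\<dots> = cpr (w j \<cdot>\<^sub>m 1\<^sub>m 1) * cpr (A2 j)" unfolding A'_form[OF j]
    by (rule cpr_four_block_diag, auto simp: A2_def)
  finally show ?thesis unfolding cpr_scalar1 .
qed

lemma A2_normal: assumes j: "j < S" shows "normal_mat (A2 j)"
proof -
  have "normal_mat (A' j)" unfolding A'_def
    by (rule normal_conj[OF W_props(1)[OF j] Acar[OF j] W_props(2)[OF j] W_props(3)[OF j] Anorm[OF j]])
  hence "normal_mat (four_block_mat (w j \<cdot>\<^sub>m 1\<^sub>m 1) (0\<^sub>m 1 (p j - 1)) (0\<^sub>m (p j - 1) 1) (A2 j))"
    unfolding A'_form[OF j] .
  thus ?thesis by (subst (asm) normal_four_block_diag, auto simp: A2_def)
qed

lemma C_normal: "normal_mat C"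
proof -
  have "normal_mat Hcp" unfolding Hcp_def using n_q
    by (subst normal_four_block_diag[OF Bcar], simp, insert Bnorm normal_bd[OF A2_car A2_normal], auto)
  hence "normal_mat H" unfolding H_reidx by (rule normal_reidx[OF phi_bij Hcp_car])
  hence "normal_mat (T * H * T)" by (rule normal_conj[OF T_car H_car TT T_sym])
  thus ?thesis unfolding THT .
qed

lemma C_nonneg: "nonneg_mat C"
  unfolding nonneg_mat_def
proof (intro allI impI)
  fix i k assume i: "i < dim_row C" and k: "k < dim_col C"
  hence i: "i < n" and k: "k < n" using C_car by auto
  obtain j a where di: "dec i = (j,a)" by force
  obtain l b where dk: "dec k = (l,b)" by force
  from dec_mem[OF i] dec_mem[OF k] di dk have j: "j < S" and a: "a < p j" and l: "l < S" and b: "b < p l"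
    by (auto simp: Sig_def)
  have "C $$ (i,k) = Cf (j,a) (l,b)" using i k di dk by (simp add: C_def)
  also have "\<dots> \<ge> 0"
  proof (cases "j = l")
    case True
    have "M j l = 0" unfolding M_def using Bdiag[OF j] True by simp
    thus ?thesis unfolding Cf_def using True Ann[OF j a] b by auto
  next
    case False
    have "M j l \<ge> 0" unfolding M_def using Bnn[OF j l] False by simp
    thus ?thesis unfolding Cf_def using False unn[OF j a] unn[OF l b] by auto
  qed
  finally show "C $$ (i,k) \<ge> 0" .
qed

lemma C_centro: "centrosymmetric C"
  unfolding centrosymmetric_def
proof -
  have dr: "dim_row C = n" using C_car by auto
  show "rev_id (dim_row C) * C * rev_id (dim_row C) = C" unfolding dr
  proof (rule eq_matI)
    fix i k assume "i < dim_row C" "k < dim_col C"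
    hence i: "i < n" and k: "k < n" using C_car by auto
    obtain j a where di: "dec i = (j,a)" by force
    obtain l b where dk: "dec k = (l,b)" by force
    from dec_mem[OF i] dec_mem[OF k] di dk have ja: "(j,a) \<in> Sig S p" and lb: "(l,b) \<in> Sig S p" by auto
    from ja lb have j: "j < S" and a: "a < p j" and l: "l < S" and b: "b < p l" by (auto simp: Sig_def)
    have li: "lay S p n (j,a) = i" using lay_dec[OF i] di by simp
    have lk: "lay S p n (l,b) = k" using lay_dec[OF k] dk by simp
    have mi: "dec (n - 1 - i) = (j, p j - 1 - a)"
      using lay_mirror[OF n_def odd1 ja] li dec_lay[of "(j, p j - 1 - a)"] a j by (auto simp: Sig_def)
    have mk: "dec (n - 1 - k) = (l, p l - 1 - b)"
      using lay_mirror[OF n_def odd1 lb] lk dec_lay[of "(l, p l - 1 - b)"] b l by (auto simp: Sig_def)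
    have "(rev_id n * C * rev_id n) $$ (i,k) = C $$ (n - 1 - i, n - 1 - k)"
      by (rule rev_id_conj[OF C_car i k])
    also have "\<dots> = Cf (j, p j - 1 - a) (l, p l - 1 - b)" using i k mi mk by (simp add: C_def)
    also have "\<dots> = Cf (j,a) (l,b)" unfolding Cf_def using Acs[OF j a] usym[OF j a] usym[OF l b] b by (cases "j = l", auto)
    also have "\<dots> = C $$ (i,k)" using i k di dk by (simp add: C_def)
    finally show "(rev_id n * C * rev_id n) $$ (i,k) = C $$ (i,k)" .
  qed (insert C_car, auto simp: rev_id_def)
qed

end


lemma cs_sum: fixes x y :: "nat \<Rightarrow> real" assumes fin: "finite I"
  shows "(\<Sum>i\<in>I. x i * y i)^2 \<le> (\<Sum>i\<in>I. x i * x i) * (\<Sum>i\<in>I. y i * y i)"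
proof -
  define a where "a = (\<Sum>i\<in>I. x i * x i)"
  define b where "b = (\<Sum>i\<in>I. x i * y i)"
  define c where "c = (\<Sum>i\<in>I. y i * y i)"
  have c0: "c \<ge> 0" unfolding c_def by (intro sum_nonneg, auto)
  have "0 \<le> (\<Sum>i\<in>I. (c * x i - b * y i)^2)" by (intro sum_nonneg, auto)
  also have "\<dots> = (\<Sum>i\<in>I. c * c * (x i * x i) - 2 * c * b * (x i * y i) + b * b * (y i * y i))"
    by (rule sum.cong, auto simp: power2_eq_square algebra_simps)
  also have "\<dots> = c * c * a - 2 * c * b * b + b * b * c"
    unfolding a_def b_def c_def by (simp add: sum.distrib sum_subtractf sum_distrib_left)
  also have "\<dots> = c * (a * c - b * b)" by (simp add: algebra_simps)
  finally have 1: "0 \<le> c * (a * c - b * b)" .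
  show ?thesis
  proof (cases "c = 0")
    case True
    {
      fix i assume "i \<in> I"
      have "y i * y i = 0"
        using \<open>c = 0\<close>[unfolded c_def] sum_nonneg_eq_0_iff[OF fin, of "\<lambda>i. y i * y i"] \<open>i \<in> I\<close> by auto
    }
    hence "b = 0" unfolding b_def by (intro sum.neutral, auto)
    moreover have "a \<ge> 0" unfolding a_def by (intro sum_nonneg, auto)
    ultimately show ?thesis unfolding b_def[symmetric] a_def[symmetric] c_def[symmetric] using c0 by (simp add: power2_eq_square)
  next
    case False
    with c0 have "c > 0" by auto
    with 1 have "a * c - b * b \<ge> 0" by (simp add: zero_le_mult_iff)
    thus ?thesis unfolding b_def[symmetric] a_def[symmetric] c_def[symmetric] by (simp add: power2_eq_square algebra_simps)
  qed
qed

lemma adj: fixes A :: "real mat" assumes A: "A \<in> carrier_mat p p" and x: "x \<in> carrier_vec p" and y: "y \<in> carrier_vec p"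
  shows "(A *\<^sub>v x) \<bullet> y = x \<bullet> (transpose_mat A *\<^sub>v y)"
proof -
  have "(A *\<^sub>v x) \<bullet> y = (\<Sum>i = 0..<p. (\<Sum>l = 0..<p. A $$ (i,l) * x $ l) * y $ i)"
    using A x y by (auto simp: scalar_prod_def mult_mat_vec_def intro!: sum.cong)
  also have "\<dots> = (\<Sum>i = 0..<p. \<Sum>l = 0..<p. A $$ (i,l) * x $ l * y $ i)"
    by (simp add: sum_distrib_right)
  also have "\<dots> = (\<Sum>l = 0..<p. \<Sum>i = 0..<p. A $$ (i,l) * x $ l * y $ i)"
    by (rule sum.swap)
  also have "\<dots> = (\<Sum>l = 0..<p. x $ l * (\<Sum>i = 0..<p. A $$ (i,l) * y $ i))"
    by (simp add: sum_distrib_left algebra_simps)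
  also have "\<dots> = x \<bullet> (transpose_mat A *\<^sub>v y)"
    using A x y by (auto simp: scalar_prod_def mult_mat_vec_def intro!: sum.cong)
  finally show ?thesis .
qed

lemma cs_vec: fixes x y :: "real vec" assumes x: "x \<in> carrier_vec p" and y: "y \<in> carrier_vec p"
  shows "(x \<bullet> y)^2 \<le> (x \<bullet> x) * (y \<bullet> y)"
  using cs_sum[of "{0..<p}" "\<lambda>i. x $ i" "\<lambda>i. y $ i"] x y by (simp add: scalar_prod_def)

lemma normal_mv: fixes A :: "real mat" assumes A: "A \<in> carrier_mat p p" and N: "normal_mat A" and y: "y \<in> carrier_vec p"
  shows "A *\<^sub>v (transpose_mat A *\<^sub>v y) = transpose_mat A *\<^sub>v (A *\<^sub>v y)"
proof -
  have AT: "transpose_mat A \<in> carrier_mat p p" using A by auto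
  have "A *\<^sub>v (transpose_mat A *\<^sub>v y) = (A * transpose_mat A) *\<^sub>v y" using A AT y by simp
  also have "\<dots> = (transpose_mat A * A) *\<^sub>v y" using N unfolding normal_mat_def by simp
  also have "\<dots> = transpose_mat A *\<^sub>v (A *\<^sub>v y)" using A AT y by simp
  finally show ?thesis .
qed

lemma logconv: fixes A :: "real mat" assumes A: "A \<in> carrier_mat p p" and N: "normal_mat A" and x: "x \<in> carrier_vec p"
  shows "((A *\<^sub>v x) \<bullet> (A *\<^sub>v x))^2 \<le> (x \<bullet> x) * ((A *\<^sub>v (A *\<^sub>v x)) \<bullet> (A *\<^sub>v (A *\<^sub>v x)))"
proof -
  have AT: "transpose_mat A \<in> carrier_mat p p" using A by auto
  let ?y = "A *\<^sub>v x"
  have y: "?y \<in> carrier_vec p" using A x by auto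
  let ?z = "transpose_mat A *\<^sub>v ?y"
  have z: "?z \<in> carrier_vec p" using AT y by auto
  have 1: "?y \<bullet> ?y = x \<bullet> ?z" by (rule adj[OF A x y])
  have 2: "?z \<bullet> ?z = (A *\<^sub>v ?y) \<bullet> (A *\<^sub>v ?y)"
  proof -
    have "?z \<bullet> ?z = ?y \<bullet> (transpose_mat (transpose_mat A) *\<^sub>v ?z)" by (rule adj[OF AT y z])
    also have "transpose_mat (transpose_mat A) *\<^sub>v ?z = transpose_mat A *\<^sub>v (A *\<^sub>v ?y)"
      using normal_mv[OF A N y] by simp
    also have "?y \<bullet> \<dots> = (transpose_mat A *\<^sub>v (A *\<^sub>v ?y)) \<bullet> ?y"
      by (rule comm_scalar_prod[of _ p], insert AT A y, auto)
    also have "\<dots> = (A *\<^sub>v ?y) \<bullet> (transpose_mat (transpose_mat A) *\<^sub>v ?y)"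
      by (rule adj[OF AT _ y], insert A y, auto)
    finally show ?thesis by simp
  qed
  show ?thesis unfolding 1 using cs_vec[OF x z] unfolding 2 .
qed

lemma pow_smult: assumes X: "X \<in> carrier_mat n n"
  shows "(c \<cdot>\<^sub>m X) ^\<^sub>m k = (c ^ k) \<cdot>\<^sub>m (X ^\<^sub>m k :: 'a :: comm_semiring_1 mat)"
proof (induct k)
  case 0 show ?case using X by (auto intro!: eq_matI)
next
  case (Suc k)
  have "(c \<cdot>\<^sub>m X) ^\<^sub>m Suc k = (c ^ k \<cdot>\<^sub>m X ^\<^sub>m k) * (c \<cdot>\<^sub>m X)" using Suc by simp
  also have "\<dots> = c ^ k \<cdot>\<^sub>m (X ^\<^sub>m k * (c \<cdot>\<^sub>m X))" using X by (intro mult_smult_assoc_mat, auto)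
  also have "X ^\<^sub>m k * (c \<cdot>\<^sub>m X) = c \<cdot>\<^sub>m (X ^\<^sub>m k * X)" using X by (intro mult_smult_distrib, auto)
  finally show ?case by (auto intro!: eq_matI simp: ac_simps)
qed

lemma smult_mv: assumes X: "X \<in> carrier_mat n n" and v: "v \<in> carrier_vec n"
  shows "(c \<cdot>\<^sub>m X) *\<^sub>v v = c \<cdot>\<^sub>v (X *\<^sub>v (v :: 'a :: comm_ring_1 vec))"
  by (rule eq_vecI, insert X v, auto simp: scalar_prod_def sum_distrib_left ac_simps)

lemma pow_bound: fixes A :: "real mat"
  assumes A: "A \<in> carrier_mat p p" and p: "p > 0" and pr: "perron_root A = w" and t: "t > w" and t0: "t > 0"
  shows "\<exists>c. \<forall>k i l. i < p \<longrightarrow> l < p \<longrightarrow> \<bar>(A ^\<^sub>m k) $$ (i,l)\<bar> \<le> c * t ^ k"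
proof -
  let ?Ac = "map_mat complex_of_real A"
  define Bt where "Bt = complex_of_real (1 / t) \<cdot>\<^sub>m ?Ac"
  have Ac: "?Ac \<in> carrier_mat p p" using A by auto
  have Bt: "Bt \<in> carrier_mat p p" using A unfolding Bt_def by auto
  have sr: "spectral_radius Bt < 1"
  proof -
    from spectral_radius_mem_max(1)[OF Bt p] obtain mu where mu: "mu \<in> spectrum Bt" and eq: "spectral_radius Bt = norm mu" by auto
    from mu obtain v where v: "v \<in> carrier_vec p" "v \<noteq> 0\<^sub>v p" "Bt *\<^sub>v v = mu \<cdot>\<^sub>v v"
      unfolding spectrum_def eigenvalue_def eigenvector_def using Bt by auto
    have "?Ac *\<^sub>v v = (complex_of_real t * mu) \<cdot>\<^sub>v v"
    proof -
      have tt: "\<And>a. complex_of_real t * (complex_of_real (1 / t) * complex_of_real a) = complex_of_real a"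
      proof -
        fix a :: real
        have "complex_of_real t * (complex_of_real (1 / t) * complex_of_real a) = complex_of_real (t * (1 / t) * a)" by simp
        also have "t * (1 / t) * a = a" using t0 by simp
        finally show "complex_of_real t * (complex_of_real (1 / t) * complex_of_real a) = complex_of_real a" .
      qed
      have "?Ac = complex_of_real t \<cdot>\<^sub>m Bt" unfolding Bt_def by (rule eq_matI, auto simp del: of_real_mult of_real_divide simp: tt)
      hence "?Ac *\<^sub>v v = complex_of_real t \<cdot>\<^sub>v (Bt *\<^sub>v v)" using smult_mv[OF Bt v(1)] by simp
      thus ?thesis unfolding v(3) by (simp add: smult_smult_assoc)
    qed
    hence "complex_of_real t * mu \<in> spectrum ?Ac" unfolding spectrum_def eigenvalue_def eigenvector_def using v Ac by auto
    hence "norm (complex_of_real t * mu) \<le> spectral_radius ?Ac" by (intro spectral_radius_mem_max(2)[OF Ac p], auto)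
    hence "t * norm mu \<le> w" using pr t0 unfolding perron_root_def by (simp add: norm_mult)
    hence "norm mu \<le> w / t" using t0 by (simp add: field_simps)
    also have "\<dots> < 1" using t t0 by simp
    finally show ?thesis using eq by simp
  qed
  have jnf: "\<exists>n_as. jordan_nf Bt n_as"
    using char_poly_factorized[OF Bt] jordan_nf_exists[OF Bt] by blast
  from spectral_radius_jnf_norm_bound_less_1[OF Bt sr jnf] obtain c where c: "\<And>k. norm_bound (Bt ^\<^sub>m k) c" by auto
  show ?thesis
  proof (intro exI[of _ c] allI impI)
    fix k i l assume i: "i < p" and l: "l < p"
    have "Bt ^\<^sub>m k = complex_of_real (1 / t) ^ k \<cdot>\<^sub>m ?Ac ^\<^sub>m k" unfolding Bt_def by (rule pow_smult[OF Ac])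
    also have "?Ac ^\<^sub>m k = map_mat complex_of_real (A ^\<^sub>m k)" by (rule of_real_hom.mat_hom_pow[OF A, symmetric])
    finally have e: "(Bt ^\<^sub>m k) $$ (i,l) = complex_of_real ((1 / t) ^ k * (A ^\<^sub>m k) $$ (i,l))" using i l A
      by (simp del: of_real_mult of_real_power of_real_divide add: of_real_mult[symmetric] of_real_power[symmetric])
    have nb: "norm ((Bt ^\<^sub>m k) $$ (i,l)) \<le> c" using c[of k] i l Bt unfolding norm_bound_def by auto
    from nb[unfolded e] have "\<bar>(1 / t) ^ k * (A ^\<^sub>m k) $$ (i,l)\<bar> \<le> c" by (simp only: norm_of_real)
    hence "(1 / t) ^ k * \<bar>(A ^\<^sub>m k) $$ (i,l)\<bar> \<le> c" using t0 by (simp add: abs_mult)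
    thus "\<bar>(A ^\<^sub>m k) $$ (i,l)\<bar> \<le> c * t ^ k" using t0 by (simp add: field_simps power_divide)
  qed
qed

lemma funpow_mv: fixes A :: "real mat" assumes A: "A \<in> carrier_mat p p" and v: "v \<in> carrier_vec p"
  shows "((\<lambda>x. A *\<^sub>v x) ^^ k) v = (A ^\<^sub>m k) *\<^sub>v v"
  using v
proof (induct k arbitrary: v)
  case 0 thus ?case using A by auto
next
  case (Suc k)
  have "((\<lambda>x. A *\<^sub>v x) ^^ Suc k) v = ((\<lambda>x. A *\<^sub>v x) ^^ k) (A *\<^sub>v v)" by (simp only: funpow_Suc_right comp_def)
  also have "\<dots> = (A ^\<^sub>m k) *\<^sub>v (A *\<^sub>v v)" using Suc A by auto
  also have "\<dots> = (A ^\<^sub>m k * A) *\<^sub>v v" using A Suc by (intro assoc_mult_mat_vec[symmetric], auto)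
  finally show ?case by simp
qed

lemma funpow_mv_car: fixes A :: "real mat" assumes A: "A \<in> carrier_mat p p" and v: "v \<in> carrier_vec p"
  shows "((\<lambda>x. A *\<^sub>v x) ^^ k) v \<in> carrier_vec p"
  by (induct k, insert A v, auto)

lemma sq_bound: fixes A :: "real mat" assumes A: "A \<in> carrier_mat p p" and v: "v \<in> carrier_vec p"
  and c: "\<And>i l. i < p \<Longrightarrow> l < p \<Longrightarrow> \<bar>A $$ (i,l)\<bar> \<le> c"
  shows "(A *\<^sub>v v) \<bullet> (A *\<^sub>v v) \<le> real p * (c * (\<Sum>l = 0..<p. \<bar>v $ l\<bar>))^2"
proof -
  define V where "V = (\<Sum>l = 0..<p. \<bar>v $ l\<bar>)"
  have "(A *\<^sub>v v) \<bullet> (A *\<^sub>v v) = (\<Sum>i = 0..<p. (\<Sum>l = 0..<p. A $$ (i,l) * v $ l)^2)"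
    using A v by (auto simp: scalar_prod_def mult_mat_vec_def power2_eq_square intro!: sum.cong)
  also have "\<dots> \<le> (\<Sum>i = 0..<p. (c * V)^2)"
  proof (rule sum_mono)
    fix i assume i: "i \<in> {0..<p}"
    have "\<bar>\<Sum>l = 0..<p. A $$ (i,l) * v $ l\<bar> \<le> (\<Sum>l = 0..<p. \<bar>A $$ (i,l) * v $ l\<bar>)" by (rule sum_abs)
    also have "\<dots> \<le> (\<Sum>l = 0..<p. c * \<bar>v $ l\<bar>)"
      by (rule sum_mono, insert c i, auto simp: abs_mult intro!: mult_right_mono)
    also have "\<dots> = c * V" unfolding V_def by (simp add: sum_distrib_left)
    finally have "\<bar>\<Sum>l = 0..<p. A $$ (i,l) * v $ l\<bar> \<le> c * V" .
    thus "(\<Sum>l = 0..<p. A $$ (i,l) * v $ l)^2 \<le> (c * V)^2"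
      by (metis abs_ge_zero abs_le_square_iff abs_of_nonneg order_trans power2_abs)
  qed
  also have "\<dots> = real p * (c * V)^2" by simp
  finally show ?thesis unfolding V_def .
qed

lemma norm_le: fixes A :: "real mat"
  assumes A: "A \<in> carrier_mat p p" and p: "p > 0" and N: "normal_mat A" and pr: "perron_root A = w" and w0: "0 \<le> w"
    and v: "v \<in> carrier_vec p"
  shows "(A *\<^sub>v v) \<bullet> (A *\<^sub>v v) \<le> w^2 * (v \<bullet> v)"
proof (rule ccontr)
  define f where "f = (\<lambda>x. A *\<^sub>v x)"
  define a where "a k = (f ^^ k) v \<bullet> (f ^^ k) v" for k
  have car: "\<And>k. (f ^^ k) v \<in> carrier_vec p" unfolding f_def by (rule funpow_mv_car[OF A v])
  have a0: "a 0 = v \<bullet> v" and a1: "a 1 = (A *\<^sub>v v) \<bullet> (A *\<^sub>v v)" unfolding a_def f_def by auto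
  have lc: "\<And>k. (a (Suc k))^2 \<le> a k * a (Suc (Suc k))"
    unfolding a_def using logconv[OF A N car] unfolding f_def by simp
  have anneg: "\<And>k. a k \<ge> 0" unfolding a_def
    using car by (auto simp: scalar_prod_def intro!: sum_nonneg)
  assume "\<not> ?thesis"
  hence gt: "a 1 > w^2 * a 0" unfolding a0 a1 by simp
  have pos0: "a 0 > 0"
  proof (rule ccontr)
    assume "\<not> a 0 > 0"
    hence "a 0 = 0" using anneg[of 0] by simp
    hence "(a 1)^2 \<le> 0" using lc[of 0] by simp
    hence "a 1 = 0" by simp
    thus False using gt \<open>a 0 = 0\<close> by simp
  qed
  define q where "q = a 1 / a 0"
  have qw: "q > w^2" using gt pos0 unfolding q_def by (simp add: field_simps)
  define s where "s = (w^2 + q) / 2"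
  have sw: "s > w^2" "s < q" using qw unfolding s_def by auto
  define t where "t = sqrt s"
  have s0: "s > 0" using sw w0 by (smt (verit) zero_le_power2)
  have t0: "t > 0" unfolding t_def using s0 by simp
  have tw: "t > w" unfolding t_def using sw w0 by (metis real_sqrt_abs real_sqrt_less_iff abs_of_nonneg)
  have ts: "t^2 = s" unfolding t_def using s0 by simp
  from pow_bound[OF A p pr tw t0] obtain c where c: "\<And>k i l. i < p \<Longrightarrow> l < p \<Longrightarrow> \<bar>(A ^\<^sub>m k) $$ (i,l)\<bar> \<le> c * t ^ k" by blast
  define K where "K = real p * (c * (\<Sum>l = 0..<p. \<bar>v $ l\<bar>))^2"
  have up: "\<And>k. a k \<le> K * s ^ k"
  proof -
    fix k
    have "a k = ((A ^\<^sub>m k) *\<^sub>v v) \<bullet> ((A ^\<^sub>m k) *\<^sub>v v)" unfolding a_def f_def funpow_mv[OF A v] ..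
    also have "\<dots> \<le> real p * (c * t ^ k * (\<Sum>l = 0..<p. \<bar>v $ l\<bar>))^2"
      by (rule sq_bound[OF _ v c], insert A, auto)
    also have "\<dots> = K * s ^ k" unfolding K_def ts[symmetric] by (simp add: power_mult_distrib power_mult[symmetric] ac_simps)
    finally show "a k \<le> K * s ^ k" .
  qed
  have q0: "q > 0" using qw by (smt (verit) zero_le_power2)
  have grow: "\<And>k. a k > 0 \<and> a (Suc k) \<ge> q * a k"
  proof -
    fix k show "a k > 0 \<and> a (Suc k) \<ge> q * a k"
    proof (induct k)
      case 0 thus ?case using pos0 unfolding q_def by simp
    next
      case (Suc k)
      hence ak: "a k > 0" and ind: "a (Suc k) \<ge> q * a k" by auto
      have as: "a (Suc k) > 0" using ind q0 ak by (smt (verit) mult_pos_pos)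
      have "q * a k * a (Suc k) \<le> a (Suc k) * a (Suc k)" using ind as by (intro mult_right_mono, auto)
      also have "\<dots> \<le> a k * a (Suc (Suc k))" using lc[of k] by (simp add: power2_eq_square)
      finally have "a k * (q * a (Suc k)) \<le> a k * a (Suc (Suc k))" by (simp add: ac_simps)
      hence "q * a (Suc k) \<le> a (Suc (Suc k))" using ak by (simp add: mult_le_cancel_left_pos)
      thus ?case using as by simp
    qed
  qed
  have low: "\<And>k. a k \<ge> q ^ k * a 0"
  proof -
    fix k show "a k \<ge> q ^ k * a 0"
    proof (induct k)
      case (Suc k)
      have "q ^ Suc k * a 0 = q * (q ^ k * a 0)" by simp
      also have "\<dots> \<le> q * a k" using Suc q0 by (intro mult_left_mono, auto)
      also have "\<dots> \<le> a (Suc k)" using grow[of k] by simp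
      finally show ?case .
    qed simp
  qed
  have "1 < q / s" using sw s0 by simp
  from real_arch_pow[OF this, of "K / a 0"] obtain k where k: "K / a 0 < (q / s) ^ k" by auto
  have "q ^ k * a 0 \<le> K * s ^ k" using low[of k] up[of k] by simp
  hence "(q / s) ^ k * a 0 \<le> K" using s0 by (simp add: power_divide field_simps)
  hence "(q / s) ^ k \<le> K / a 0" using pos0 by (simp add: field_simps)
  with k show False by simp
qed

lemma mv_vec: assumes A: "A \<in> carrier_mat p p"
  shows "A *\<^sub>v vec p g = vec p (\<lambda>i. \<Sum>l<p. A $$ (i,l) * g l)"
  by (rule eq_vecI, insert A, auto simp: scalar_prod_def lessThan_atLeast0)

lemma mvT_vec: assumes A: "A \<in> carrier_mat p p"
  shows "transpose_mat A *\<^sub>v vec p g = vec p (\<lambda>i. \<Sum>l<p. A $$ (l,i) * g l)"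
  by (rule eq_vecI, insert A, auto simp: scalar_prod_def lessThan_atLeast0)

lemma sp_vec: "vec p f \<bullet> vec p g = (\<Sum>i<p. f i * g i)"
  by (auto simp: scalar_prod_def lessThan_atLeast0)

lemma perron_vec: fixes A :: "real mat"
  assumes A: "A \<in> carrier_mat p p" and p: "p > 0" and nn: "nonneg_mat A" and N: "normal_mat A"
    and cs: "\<And>a b. a < p \<Longrightarrow> b < p \<Longrightarrow> A $$ (p - 1 - a, p - 1 - b) = A $$ (a,b)"
    and pr: "perron_root A = w" and root: "poly (cpr A) (complex_of_real w) = 0" and w0: "0 \<le> w"
  shows "\<exists>u. u \<in> carrier_vec p \<and> (\<forall>a<p. 0 \<le> u $ a) \<and> u \<bullet> u = 1 \<and> A *\<^sub>v u = w \<cdot>\<^sub>v u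
     \<and> transpose_mat A *\<^sub>v u = w \<cdot>\<^sub>v u \<and> (\<forall>a<p. u $ (p - 1 - a) = u $ a)"
proof -
  have Ann: "\<And>i l. i < p \<Longrightarrow> l < p \<Longrightarrow> A $$ (i,l) \<ge> 0" using nn A unfolding nonneg_mat_def by auto
  have "cpr A = map_poly complex_of_real (char_poly A)" unfolding cpr_def by (rule of_real_hom.char_poly_hom[OF A])
  with root have "complex_of_real (poly (char_poly A) w) = 0" by (simp add: of_real_hom.poly_map_poly)
  hence "poly (char_poly A) w = 0" by simp
  hence "eigenvalue A w" using eigenvalue_root_char_poly[OF A] by simp
  then obtain x where x: "x \<in> carrier_vec p" "x \<noteq> 0\<^sub>v p" "A *\<^sub>v x = w \<cdot>\<^sub>v x"
    unfolding eigenvalue_def eigenvector_def using A by auto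
  define yf where "yf i = \<bar>x $ i\<bar>" for i
  define y where "y = vec p yf"
  have y: "y \<in> carrier_vec p" unfolding y_def by simp
  have yf0: "\<And>i. yf i \<ge> 0" unfolding yf_def by simp
  obtain i0 where i0: "i0 < p" "x $ i0 \<noteq> 0" using x(1,2) by (metis eq_vecI carrier_vecD index_zero_vec)
  have yi0: "yf i0 > 0" using i0 unfolding yf_def by simp
  define Ay where "Ay i = (\<Sum>l<p. A $$ (i,l) * yf l)" for i
  have Ay_v: "A *\<^sub>v y = vec p Ay" unfolding y_def Ay_def by (rule mv_vec[OF A])
  have Ay_ge: "\<And>i. i < p \<Longrightarrow> Ay i \<ge> w * yf i"
  proof -
    fix i assume i: "i < p"
    have "w * yf i = \<bar>(A *\<^sub>v x) $ i\<bar>" unfolding x(3) yf_def using i x(1) w0 by (simp add: abs_mult)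
    also have "(A *\<^sub>v x) $ i = (\<Sum>l<p. A $$ (i,l) * x $ l)" using A x(1) i by (auto simp: scalar_prod_def lessThan_atLeast0)
    also have "\<bar>\<dots>\<bar> \<le> (\<Sum>l<p. \<bar>A $$ (i,l) * x $ l\<bar>)" by (rule sum_abs)
    also have "\<dots> = Ay i" unfolding Ay_def yf_def using Ann[OF i] by (auto simp: abs_mult intro!: sum.cong)
    finally show "Ay i \<ge> w * yf i" .
  qed
  have nl: "(A *\<^sub>v y) \<bullet> (A *\<^sub>v y) \<le> w^2 * (y \<bullet> y)" by (rule norm_le[OF A p N pr w0 y])
  have "(\<Sum>i<p. Ay i * Ay i) \<le> (\<Sum>i<p. w^2 * (yf i * yf i))"
    using nl[unfolded Ay_v] unfolding y_def sp_vec by (simp add: sum_distrib_left)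
  hence "(\<Sum>i<p. Ay i * Ay i - w^2 * (yf i * yf i)) \<le> 0" by (simp add: sum_subtractf)
  moreover have terms: "\<And>i. i < p \<Longrightarrow> Ay i * Ay i - w^2 * (yf i * yf i) \<ge> 0"
  proof -
    fix i assume i: "i < p"
    have "0 \<le> w * yf i" using w0 yf0 by simp
    with Ay_ge[OF i] have "(w * yf i) * (w * yf i) \<le> Ay i * Ay i" by (intro mult_mono, auto)
    thus "Ay i * Ay i - w^2 * (yf i * yf i) \<ge> 0" by (simp add: power2_eq_square algebra_simps)
  qed
  ultimately have "(\<Sum>i<p. Ay i * Ay i - w^2 * (yf i * yf i)) = 0" by (meson antisym sum_nonneg lessThan_iff)
  hence z: "\<And>i. i < p \<Longrightarrow> Ay i * Ay i - w^2 * (yf i * yf i) = 0"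
  proof -
    fix i assume i: "i < p"
    have "\<forall>x\<in>{..<p}. Ay x * Ay x - w^2 * (yf x * yf x) = 0"
      using sum_nonneg_eq_0_iff[of "{..<p}" "\<lambda>i. Ay i * Ay i - w^2 * (yf i * yf i)"] terms \<open>(\<Sum>i<p. Ay i * Ay i - w^2 * (yf i * yf i)) = 0\<close>
      by auto
    thus "Ay i * Ay i - w^2 * (yf i * yf i) = 0" using i by auto
  qed
  have Ay_eq: "\<And>i. i < p \<Longrightarrow> Ay i = w * yf i"
  proof -
    fix i assume i: "i < p"
    have "Ay i * Ay i = (w * yf i) * (w * yf i)" using z[OF i] by (simp add: power2_eq_square algebra_simps)
    moreover have "w * yf i \<ge> 0" using w0 yf0 by simp
    moreover have "Ay i \<ge> 0" using Ay_ge[OF i] \<open>w * yf i \<ge> 0\<close> by linarith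
    ultimately show "Ay i = w * yf i" by (metis power2_eq_iff_nonneg power2_eq_square)
  qed
  define ATy where "ATy i = (\<Sum>l<p. A $$ (l,i) * yf l)" for i
  have ATy_v: "transpose_mat A *\<^sub>v y = vec p ATy" unfolding y_def ATy_def by (rule mvT_vec[OF A])
  have Ayv: "A *\<^sub>v y = w \<cdot>\<^sub>v y"
  proof -
    have "vec p Ay = w \<cdot>\<^sub>v y" unfolding y_def using Ay_eq by (auto intro!: eq_vecI)
    thus ?thesis unfolding Ay_v .
  qed
  have AT: "transpose_mat A \<in> carrier_mat p p" using A by auto
  have e1: "(transpose_mat A *\<^sub>v y) \<bullet> (transpose_mat A *\<^sub>v y) = w^2 * (y \<bullet> y)"
  proof -
    have "(transpose_mat A *\<^sub>v y) \<bullet> (transpose_mat A *\<^sub>v y) = y \<bullet> (transpose_mat (transpose_mat A) *\<^sub>v (transpose_mat A *\<^sub>v y))"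
      by (rule adj[OF AT y], insert AT y, auto)
    also have "\<dots> = y \<bullet> (transpose_mat A *\<^sub>v (A *\<^sub>v y))" using normal_mv[OF A N y] by simp
    also have "\<dots> = (transpose_mat A *\<^sub>v (A *\<^sub>v y)) \<bullet> y" by (rule comm_scalar_prod[of _ p], insert AT A y, auto)
    also have "\<dots> = (A *\<^sub>v y) \<bullet> (transpose_mat (transpose_mat A) *\<^sub>v y)" by (rule adj[OF AT _ y], insert A y, auto)
    also have "\<dots> = w^2 * (y \<bullet> y)" using y by (simp add: Ayv power2_eq_square)
    finally show ?thesis .
  qed
  have e2: "(transpose_mat A *\<^sub>v y) \<bullet> y = w * (y \<bullet> y)"
  proof -
    have "(transpose_mat A *\<^sub>v y) \<bullet> y = y \<bullet> (transpose_mat (transpose_mat A) *\<^sub>v y)" by (rule adj[OF AT y y])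
    also have "\<dots> = y \<bullet> (w \<cdot>\<^sub>v y)" using Ayv by simp
    finally show ?thesis using y by simp
  qed
  have "(\<Sum>i<p. (ATy i - w * yf i)^2) = (\<Sum>i<p. ATy i * ATy i) - 2 * w * (\<Sum>i<p. ATy i * yf i) + w^2 * (\<Sum>i<p. yf i * yf i)"
    by (simp add: power2_eq_square algebra_simps sum.distrib sum_subtractf sum_distrib_left)
  also have "\<dots> = 0" using e1[unfolded ATy_v] e2[unfolded ATy_v] unfolding y_def sp_vec by (simp add: power2_eq_square)
  finally have "(\<Sum>i<p. (ATy i - w * yf i)^2) = 0" .
  hence ATy_eq: "\<And>i. i < p \<Longrightarrow> ATy i = w * yf i" using sum_nonneg_eq_0_iff[of "{..<p}" "\<lambda>i. (ATy i - w * yf i)^2"] by auto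
  define zf where "zf i = yf i + yf (p - 1 - i)" for i
  have rsum: "\<And>g :: nat \<Rightarrow> real. (\<Sum>l<p. g (p - 1 - l)) = (\<Sum>l<p. g l)"
  proof -
    fix g :: "nat \<Rightarrow> real"
    have "bij_betw (\<lambda>l. p - 1 - l) {..<p} {..<p}" by (rule bij_betwI[where g="\<lambda>l. p - 1 - l"], auto)
    from sum.reindex_bij_betw[OF this, of g] show "(\<Sum>l<p. g (p - 1 - l)) = (\<Sum>l<p. g l)" .
  qed
  have AJ: "\<And>i. i < p \<Longrightarrow> (\<Sum>l<p. A $$ (i,l) * yf (p - 1 - l)) = w * yf (p - 1 - i)"
  proof -
    fix i assume i: "i < p"
    have "(\<Sum>l<p. A $$ (i,l) * yf (p - 1 - l)) = (\<Sum>l<p. (\<lambda>m. A $$ (i, p - 1 - m) * yf m) (p - 1 - l))"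
      by (rule sum.cong, auto)
    also have "\<dots> = (\<Sum>l<p. A $$ (i, p - 1 - l) * yf l)" by (rule rsum)
    also have "\<dots> = (\<Sum>l<p. A $$ (p - 1 - i, l) * yf l)"
      by (rule sum.cong, insert cs[of "p - 1 - i"] i, auto)
    also have "\<dots> = w * yf (p - 1 - i)" using Ay_eq[of "p - 1 - i"] p unfolding Ay_def by simp
    finally show "?thesis i" .
  qed
  have ATJ: "\<And>i. i < p \<Longrightarrow> (\<Sum>l<p. A $$ (l,i) * yf (p - 1 - l)) = w * yf (p - 1 - i)"
  proof -
    fix i assume i: "i < p"
    have "(\<Sum>l<p. A $$ (l,i) * yf (p - 1 - l)) = (\<Sum>l<p. (\<lambda>m. A $$ (p - 1 - m, i) * yf m) (p - 1 - l))"
      by (rule sum.cong, auto)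
    also have "\<dots> = (\<Sum>l<p. A $$ (p - 1 - l, i) * yf l)" by (rule rsum)
    also have "\<dots> = (\<Sum>l<p. A $$ (l, p - 1 - i) * yf l)"
    proof (rule sum.cong[OF refl])
      fix l assume l: "l \<in> {..<p}"
      have "A $$ (p - 1 - l, p - 1 - (p - 1 - i)) = A $$ (l, p - 1 - i)" using l i by (intro cs, auto)
      moreover have "p - 1 - (p - 1 - i) = i" using i by auto
      ultimately show "A $$ (p - 1 - l, i) * yf l = A $$ (l, p - 1 - i) * yf l" by simp
    qed
    also have "\<dots> = w * yf (p - 1 - i)" using ATy_eq[of "p - 1 - i"] p unfolding ATy_def by simp
    finally show "?thesis i" .
  qed
  define zz where "zz = (\<Sum>i<p. zf i * zf i)"
  have zz0: "zz > 0"
  proof -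
    have "zf i0 * zf i0 > 0" using yi0 yf0[of "p - 1 - i0"] unfolding zf_def by (simp add: add_pos_nonneg)
    moreover have "zf i0 * zf i0 \<le> zz" unfolding zz_def using i0(1)
      by (intro member_le_sum, auto)
    ultimately show ?thesis by simp
  qed
  define r where "r = 1 / sqrt zz"
  define u where "u = vec p (\<lambda>i. r * zf i)"
  have r0: "r > 0" unfolding r_def using zz0 by simp
  show ?thesis
  proof (intro exI[of _ u] conjI allI impI)
    show "u \<in> carrier_vec p" unfolding u_def by simp
    show "\<And>a. a < p \<Longrightarrow> 0 \<le> u $ a" unfolding u_def zf_def using r0 yf0 by simp
    show "u \<bullet> u = 1"
    proof -
      have "u \<bullet> u = r * r * zz" unfolding u_def sp_vec zz_def by (simp add: sum_distrib_left ac_simps)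
      also have "\<dots> = 1" unfolding r_def using zz0 by (simp add: field_simps)
      finally show ?thesis .
    qed
    show "A *\<^sub>v u = w \<cdot>\<^sub>v u" unfolding u_def mv_vec[OF A]
    proof (rule eq_vecI)
      fix i assume "i < dim_vec (w \<cdot>\<^sub>v vec p (\<lambda>i. r * zf i))"
      hence i: "i < p" by simp
      have "(\<Sum>l<p. A $$ (i, l) * (r * zf l)) = r * (Ay i + (\<Sum>l<p. A $$ (i,l) * yf (p - 1 - l)))"
        unfolding Ay_def zf_def by (simp add: sum_distrib_left sum.distrib algebra_simps)
      also have "\<dots> = w * (r * zf i)" unfolding Ay_eq[OF i] AJ[OF i] zf_def by (simp add: algebra_simps)
      finally show "vec p (\<lambda>i. \<Sum>l<p. A $$ (i, l) * (r * zf l)) $ i = (w \<cdot>\<^sub>v vec p (\<lambda>i. r * zf i)) $ i" using i by simp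
    qed simp
    show "transpose_mat A *\<^sub>v u = w \<cdot>\<^sub>v u" unfolding u_def mvT_vec[OF A]
    proof (rule eq_vecI)
      fix i assume "i < dim_vec (w \<cdot>\<^sub>v vec p (\<lambda>i. r * zf i))"
      hence i: "i < p" by simp
      have "(\<Sum>l<p. A $$ (l, i) * (r * zf l)) = r * (ATy i + (\<Sum>l<p. A $$ (l,i) * yf (p - 1 - l)))"
        unfolding ATy_def zf_def by (simp add: sum_distrib_left sum.distrib algebra_simps)
      also have "\<dots> = w * (r * zf i)" unfolding ATy_eq[OF i] ATJ[OF i] zf_def by (simp add: algebra_simps)
      finally show "vec p (\<lambda>i. \<Sum>l<p. A $$ (l, i) * (r * zf l)) $ i = (w \<cdot>\<^sub>v vec p (\<lambda>i. r * zf i)) $ i" using i by simp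
    qed simp
    fix a assume a: "a < p"
    show "u $ (p - 1 - a) = u $ a" unfolding u_def zf_def using a by simp
  qed
qed






lemma off_length: fixes S :: nat shows "off (\<lambda>j. length (P j)) S = size (\<Sum>j<S. mset (P j))"
  by (induct S, auto simp: off_def)

lemma prod_part: fixes S :: nat shows "prod_mset (image_mset f (\<Sum>j<S. mset (P j))) = (\<Prod>j<S. prod_list (map f (P j)))"
  by (induct S, auto simp: prod_mset_prod_list[symmetric])

theorem theorem4p2:
  fixes lam :: "complex list" and S :: nat and w :: "nat \<Rightarrow> real"
    and P :: "nat \<Rightarrow> complex list" and B :: "real mat"
  assumes n_pos: "lam \<noteq> []"
    and lam1_real: "lam ! 0 \<in> \<real>"
    and lam1_dom: "\<forall>j. 0 < j \<and> j < length lam \<longrightarrow> cmod (lam ! j) \<le> Re (lam ! 0)"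
    and sum_nonneg: "0 \<le> Re (sum_list lam)"
    and conj_closed: "mset (map cnj lam) = mset lam"
    and S_pos: "0 < S" and S_le: "S \<le> length lam"
    and w_bounds: "\<forall>k<S. 0 \<le> w k \<and> w k \<le> Re (lam ! 0)"
    and part: "mset lam = (\<Sum>j<S. mset (P j))"
    and part_ne: "\<forall>j<S. P j \<noteq> []"
    and part_first: "hd (P 0) = lam ! 0"
    and odd_le1: "card {j. j < S \<and> odd (length (P j))} \<le> 1"
    and Gamma: "\<forall>j<S. \<exists>A. realizes (complex_of_real (w j) # tl (P j)) A \<and> normal_mat A
                  \<and> centrosymmetric A \<and> nonneg_mat A \<and> perron_root A = w j"
    and B_real: "realizes (map (\<lambda>j. hd (P j)) [0..<S]) B"
    and B_normal: "normal_mat B" and B_nonneg: "nonneg_mat B"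
    and B_diag: "\<forall>i<S. B $$ (i, i) = w (S - 1 - i)"
  shows "NCN_realizable lam"
proof -
  define p where "p j = length (P j)" for j
  define n where n_lam: "n = length lam"
  have n_off: "n = off p S" unfolding n_lam p_def off_length[symmetric, of P S]
    using arg_cong[OF part, of size] by (simp add: off_def)
  have ppos: "\<And>j. j < S \<Longrightarrow> p j > 0" using part_ne by (auto simp: p_def)
  from Gamma obtain Af where Af: "\<And>j. j < S \<Longrightarrow> realizes (complex_of_real (w j) # tl (P j)) (Af j) \<and> normal_mat (Af j)
                  \<and> centrosymmetric (Af j) \<and> nonneg_mat (Af j) \<and> perron_root (Af j) = w j"
    by metis
  have Acar: "\<And>j. j < S \<Longrightarrow> Af j \<in> carrier_mat (p j) (p j)"
  proof -
    fix j assume j: "j < S"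
    have "length (complex_of_real (w j) # tl (P j)) = p j" using ppos[OF j] by (cases "P j", auto simp: p_def)
    thus "Af j \<in> carrier_mat (p j) (p j)" using Af[OF j] unfolding realizes_def by metis
  qed
  have Acs: "\<And>j a b. j < S \<Longrightarrow> a < p j \<Longrightarrow> b < p j \<Longrightarrow> Af j $$ (p j - 1 - a, p j - 1 - b) = Af j $$ (a,b)"
  proof -
    fix j a b assume j: "j < S" and a: "a < p j" and b: "b < p j"
    have dr: "dim_row (Af j) = p j" using Acar[OF j] by auto
    have "Af j $$ (p j - 1 - a, p j - 1 - b) = (rev_id (p j) * Af j * rev_id (p j)) $$ (a,b)"
      using rev_id_conj[OF Acar[OF j] a b] by simp
    also have "\<dots> = Af j $$ (a,b)" using Af[OF j] unfolding centrosymmetric_def dr by simp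
    finally show "Af j $$ (p j - 1 - a, p j - 1 - b) = Af j $$ (a,b)" .
  qed
  have cpA: "\<And>j. j < S \<Longrightarrow> cpr (Af j) = [:- complex_of_real (w j), 1:] * (\<Prod>a\<leftarrow>tl (P j). [:- a, 1:])"
    using Af unfolding realizes_def cpr_def by simp
  have uex: "\<And>j. j < S \<Longrightarrow> \<exists>v. v \<in> carrier_vec (p j) \<and> (\<forall>a<p j. 0 \<le> v $ a) \<and> v \<bullet> v = 1 \<and> Af j *\<^sub>v v = w j \<cdot>\<^sub>v v
     \<and> transpose_mat (Af j) *\<^sub>v v = w j \<cdot>\<^sub>v v \<and> (\<forall>a<p j. v $ (p j - 1 - a) = v $ a)"
  proof -
    fix j assume j: "j < S"
    show "?thesis j"
    proof (rule perron_vec[OF Acar[OF j] ppos[OF j]])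
      show "poly (cpr (Af j)) (complex_of_real (w j)) = 0" unfolding cpA[OF j] by simp
    qed (insert Af[OF j] Acs[OF j] w_bounds j, auto)
  qed
  then obtain u where u: "\<And>j. j < S \<Longrightarrow> u j \<in> carrier_vec (p j) \<and> (\<forall>a<p j. 0 \<le> u j $ a) \<and> u j \<bullet> u j = 1 \<and> Af j *\<^sub>v u j = w j \<cdot>\<^sub>v u j
     \<and> transpose_mat (Af j) *\<^sub>v u j = w j \<cdot>\<^sub>v u j \<and> (\<forall>a<p j. u j $ (p j - 1 - a) = u j $ a)"
    by metis
  have Ann: "\<And>j a b. j < S \<Longrightarrow> a < p j \<Longrightarrow> b < p j \<Longrightarrow> 0 \<le> Af j $$ (a,b)"
  proof -
    fix j a b assume j: "j < S" and a: "a < p j" and b: "b < p j"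
    from Af[OF j] have "nonneg_mat (Af j)" by simp
    thus "0 \<le> Af j $$ (a,b)" using Acar[OF j] a b unfolding nonneg_mat_def by auto
  qed
  define rv where "rv i = S - 1 - i" for i
  have rv: "bij_betw rv {..<S} {..<S}"
    by (rule bij_betwI[where g=rv], auto simp: rv_def)
  have Bc: "B \<in> carrier_mat S S" using B_real unfolding realizes_def by simp
  define Bp where "Bp = reidx rv S B"
  interpret asm S p n Af u w Bp
  proof (unfold_locales)
    show "Bp \<in> carrier_mat S S" unfolding Bp_def by simp
    show "normal_mat Bp" unfolding Bp_def by (rule normal_reidx[OF rv Bc B_normal])
    show "\<And>j k. j < S \<Longrightarrow> k < S \<Longrightarrow> 0 \<le> Bp $$ (j, k)"
      using B_nonneg Bc unfolding Bp_def nonneg_mat_def by (auto simp: rv_def)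
    show "\<And>j. j < S \<Longrightarrow> Bp $$ (j, j) = w j" unfolding Bp_def using B_diag by (auto simp: rv_def)
  qed (insert n_off odd_le1 ppos Acar u Af Acs Ann, auto simp: p_def)
  have cpA2: "\<And>j. j < S \<Longrightarrow> cpr (A2 j) = (\<Prod>a\<leftarrow>tl (P j). [:- a, 1:])"
  proof -
    fix j assume j: "j < S"
    from block_cpr[OF j] cpA[OF j] have "[:- complex_of_real (w j), 1:] * cpr (A2 j) = [:- complex_of_real (w j), 1:] * (\<Prod>a\<leftarrow>tl (P j). [:- a, 1:])"
      by (simp only:)
    moreover have "[:- complex_of_real (w j), 1:] \<noteq> 0" by simp
    ultimately show "cpr (A2 j) = (\<Prod>a\<leftarrow>tl (P j). [:- a, 1:])" by (metis mult_left_cancel)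
  qed
  have cpB: "cpr Bp = (\<Prod>j<S. [:- hd (P j), 1:])"
  proof -
    have "cpr Bp = cpr B" unfolding Bp_def by (rule cpr_reidx[OF rv Bc])
    also have "\<dots> = (\<Prod>a\<leftarrow>map (\<lambda>j. hd (P j)) [0..<S]. [:- a, 1:])" using B_real unfolding realizes_def cpr_def by simp
    also have "\<dots> = (\<Prod>j<S. [:- hd (P j), 1:])"
      by (simp add: prod.list_conv_set_nth lessThan_atLeast0)
    finally show ?thesis .
  qed
  have "cpr C = (\<Prod>a\<leftarrow>lam. [:- a, 1:])"
  proof -
    have "cpr C = (\<Prod>j<S. [:- hd (P j), 1:]) * (\<Prod>j<S. (\<Prod>a\<leftarrow>tl (P j). [:- a, 1:]))"
      unfolding cpr_C cpB using cpA2 by simp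
    also have "\<dots> = (\<Prod>j<S. (\<Prod>a\<leftarrow>P j. [:- a, 1:]))"
      unfolding prod.distrib[symmetric]
    proof (rule prod.cong[OF refl])
      fix j assume "j \<in> {..<S}"
      hence "P j \<noteq> []" using part_ne by auto
      thus "[:- hd (P j), 1:] * (\<Prod>a\<leftarrow>tl (P j). [:- a, 1:]) = (\<Prod>a\<leftarrow>P j. [:- a, 1:])" by (cases "P j", auto)
    qed
    also have "\<dots> = prod_mset (image_mset (\<lambda>a. [:- a, 1:]) (mset lam))" unfolding part prod_part ..
    also have "\<dots> = (\<Prod>a\<leftarrow>lam. [:- a, 1:])" by (induct lam, auto)
    finally show ?thesis .
  qed
  moreover have "length lam = off p S" using n_off n_lam by simp
  hence "C \<in> carrier_mat (length lam) (length lam)" using C_car n_lam by simp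
  ultimately have "realizes lam C" unfolding realizes_def cpr_def by simp
  thus ?thesis unfolding NCN_realizable_def using C_normal C_centro C_nonneg by blast
qed


end
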